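(* Let $X$ be a real Banach space with property $(\mathcal{E}')$. Then: (i) for every $w^*$-dense and norm-closed linear subspace $Y\subset X^*$, the locally convex space $(X,\mu(X,Y))$ is complete if and only if $(Y,w^* )$ has the Mazur property; (ii) $X$ is fully Mackey complete if and only if $X$ is fully Mazur.
   Context: $X$ has property $(\mathcal{E}')$ if every convex, bounded, $w^*$-sequentially closed subset of $X^*$ is $w^*$-closed. $\mu(X,Y)$ is the Mackey topology on $X$ associated to $\langle X,Y\rangle$: uniform convergence on absolutely convex $w^*$-compact subsets of $Y$. $(Y,w^* )$ has the Mazur property if every $w^*$-sequentially continuous linear functional $f:Y\to\mathbb{R}$ is $w^*$-continuous. A linear subspace $Y\subset X^*$ is norming if $|||x|||=\sup\{x^*(x): x^*\in Y,\ \|x^*\|\le 1\}$ defines an equivalent norm on $X$. $X$ is fully Mackey complete if $(X,\mu(X,Y))$ is complete for every norming and norm-closed subspace $Y\subset X^*$; $X$ is fully Mazur if $(Y,w^* )$ has the Mazur property for every norming and norm-closed subspace $Y\subset X^*$. *)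

theory Defs
  imports "HOL-Analysis.Analysis"
begin

(* The dual space X-dual of a real Banach space X is modelled as the type
  of bounded linear functionals ('a \<Rightarrow>\<^sub>L real) with the operator norm. *)

definition weakstar :: "('a::real_normed_vector \<Rightarrow>\<^sub>L real) topology" where
  "weakstar = pullback_topology UNIV (\<lambda>y x. blinfun_apply y x)
               (product_topology (\<lambda>_. euclideanreal) UNIV)"

definition weakstar_seq_closed :: "('a::real_normed_vector \<Rightarrow>\<^sub>L real) set \<Rightarrow> bool" where
  "weakstar_seq_closed C \<longleftrightarrow>
     (\<forall>s y. (\<forall>n. s n \<in> C) \<and> limitin weakstar s y sequentially \<longrightarrow> y \<in> C)"

definition property_E' :: "'a::banach itself \<Rightarrow> bool" where
  "property_E' _ \<longleftrightarrow>
     (\<forall>C :: ('a \<Rightarrow>\<^sub>L real) set. convex C \<and> bounded C \<and> weakstar_seq_closed C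
        \<longrightarrow> closedin weakstar C)"

definition mackey_sets :: "('a::real_normed_vector \<Rightarrow>\<^sub>L real) set \<Rightarrow> ('a \<Rightarrow>\<^sub>L real) set set" where
  "mackey_sets Y = {K. K \<subseteq> Y \<and> convex K \<and> (\<forall>t y. \<bar>t\<bar> \<le> 1 \<and> y \<in> K \<longrightarrow> t *\<^sub>R y \<in> K)
                        \<and> compactin (subtopology weakstar Y) K}"

(* Cauchy filters and convergence for the Mackey topology \<mu>(X,Y)
  (uniform convergence on the sets in mackey_sets Y). *)
definition mackey_cauchy :: "('a::real_normed_vector \<Rightarrow>\<^sub>L real) set \<Rightarrow> 'a filter \<Rightarrow> bool" where
  "mackey_cauchy Y F \<longleftrightarrow>
     (\<forall>K\<in>mackey_sets Y. \<forall>e>0. \<forall>\<^sub>F (x, x') in F \<times>\<^sub>F F. \<forall>y\<in>K. \<bar>blinfun_apply y (x - x')\<bar> < e)"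

definition mackey_converges :: "('a::real_normed_vector \<Rightarrow>\<^sub>L real) set \<Rightarrow> 'a filter \<Rightarrow> 'a \<Rightarrow> bool" where
  "mackey_converges Y F x0 \<longleftrightarrow>
     (\<forall>K\<in>mackey_sets Y. \<forall>e>0. \<forall>\<^sub>F x in F. \<forall>y\<in>K. \<bar>blinfun_apply y (x - x0)\<bar> < e)"

definition mackey_complete :: "('a::real_normed_vector \<Rightarrow>\<^sub>L real) set \<Rightarrow> bool" where
  "mackey_complete Y \<longleftrightarrow>
     (\<forall>F. F \<noteq> bot \<and> mackey_cauchy Y F \<longrightarrow> (\<exists>x0. mackey_converges Y F x0))"

definition mazur :: "('a::real_normed_vector \<Rightarrow>\<^sub>L real) set \<Rightarrow> bool" where
  "mazur Y \<longleftrightarrow>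
     (\<forall>f :: ('a \<Rightarrow>\<^sub>L real) \<Rightarrow> real.
        (\<forall>a b y z. y \<in> Y \<and> z \<in> Y \<longrightarrow> f (a *\<^sub>R y + b *\<^sub>R z) = a * f y + b * f z)
        \<and> (\<forall>s y. (\<forall>n. s n \<in> Y) \<and> y \<in> Y \<and> limitin (subtopology weakstar Y) s y sequentially
                 \<longrightarrow> (\<lambda>n. f (s n)) \<longlonglongrightarrow> f y)
        \<longrightarrow> continuous_map (subtopology weakstar Y) euclideanreal f)"

(* Y is norming: |||x||| = sup {y x : y \<in> Y, \<parallel>y\<parallel> \<le> 1} is an equivalent norm
  (the bound |||x||| \<le> \<parallel>x\<parallel> is automatic). *)
definition norming :: "('a::real_normed_vector \<Rightarrow>\<^sub>L real) set \<Rightarrow> bool" where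
  "norming Y \<longleftrightarrow>
     (\<exists>c>0. \<forall>x. c * norm x \<le> (SUP y\<in>{y\<in>Y. norm y \<le> 1}. blinfun_apply y x))"

definition fully_mackey_complete :: "'a::banach itself \<Rightarrow> bool" where
  "fully_mackey_complete _ \<longleftrightarrow>
     (\<forall>Y :: ('a \<Rightarrow>\<^sub>L real) set. subspace Y \<and> norming Y \<and> closed Y \<longrightarrow> mackey_complete Y)"

definition fully_mazur :: "'a::banach itself \<Rightarrow> bool" where
  "fully_mazur _ \<longleftrightarrow>
     (\<forall>Y :: ('a \<Rightarrow>\<^sub>L real) set. subspace Y \<and> norming Y \<and> closed Y \<longrightarrow> mazur Y)"

end

theory Submission
  imports Defs
begin

lemma weakstar_sot: "weakstar = strong_operator_topology"
  unfolding weakstar_def strong_operator_topology_def euclidean_product_topology by simp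

lemma topspace_weakstar [simp]: "topspace weakstar = UNIV"
  by (simp add: weakstar_sot strong_operator_topology_topspace)

lemma ws_eval: "continuous_map weakstar euclideanreal (\<lambda>f. blinfun_apply f x)"
  by (simp add: weakstar_sot strong_operator_topology_continuous_evaluation)

lemma ws_cont_iff:
  "continuous_map T weakstar f \<longleftrightarrow> (\<forall>x. continuous_map T euclideanreal (\<lambda>y. blinfun_apply (f y) x))"
  by (simp add: weakstar_sot continuous_on_strong_operator_topo_iff_coordinatewise)

lemma ws_limit_iff:
  "limitin weakstar s y F \<longleftrightarrow> (\<forall>x. ((\<lambda>n. blinfun_apply (s n) x) \<longlongrightarrow> blinfun_apply y x) F)"
proof
  assume "limitin weakstar s y F"
  then show "\<forall>x. ((\<lambda>n. blinfun_apply (s n) x) \<longlongrightarrow> blinfun_apply y x) F"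
    using continuous_map_limit[OF ws_eval] by (auto simp: o_def)
next
  assume H: "\<forall>x. ((\<lambda>n. blinfun_apply (s n) x) \<longlongrightarrow> blinfun_apply y x) F"
  have L: "limitin (product_topology (\<lambda>_. euclideanreal) UNIV) (\<lambda>n. blinfun_apply (s n)) (blinfun_apply y) F"
    using H by (simp add: limitin_componentwise)
  show "limitin weakstar s y F"
    unfolding limitin_def
  proof (intro conjI allI impI)
    show "y \<in> topspace weakstar" by simp
    fix U assume "openin weakstar U \<and> y \<in> U"
    then obtain V where V: "openin (product_topology (\<lambda>_. euclideanreal) UNIV) V"
        "U = (\<lambda>y x. blinfun_apply y x) -` V \<inter> UNIV" "y \<in> U"
      unfolding weakstar_def openin_pullback_topology by blast
    then have "blinfun_apply y \<in> V" by auto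
    then have "\<forall>\<^sub>F n in F. blinfun_apply (s n) \<in> V"
      using L V(1) unfolding limitin_def by blast
    then show "\<forall>\<^sub>F n in F. s n \<in> U"
      using V(2) by (auto elim: eventually_mono)
  qed
qed

lemma ws_open_nbhd:
  assumes "openin weakstar U" "f \<in> U"
  shows "\<exists>S \<delta>. finite S \<and> \<delta> > 0 \<and>
           (\<forall>g. (\<forall>x\<in>S. \<bar>blinfun_apply g x - blinfun_apply f x\<bar> < \<delta>) \<longrightarrow> g \<in> U)"
proof -
  obtain V where V: "openin (product_topology (\<lambda>_. euclideanreal) UNIV) V"
      "U = (\<lambda>y x. blinfun_apply y x) -` V \<inter> UNIV"
    using assms unfolding weakstar_def openin_pullback_topology by blast
  then have "blinfun_apply f \<in> V" using assms by auto
  then obtain W where W: "finite {i. W i \<noteq> UNIV}" "\<And>i. open (W i)"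
      "blinfun_apply f \<in> PiE UNIV W" "PiE UNIV W \<subseteq> V"
    using V(1) unfolding openin_product_topology_alt by auto
  define S where "S = {i. W i \<noteq> UNIV}"
  have "\<forall>i. \<exists>d>0. \<forall>t. \<bar>t - blinfun_apply f i\<bar> < d \<longrightarrow> t \<in> W i"
  proof
    fix i
    have "blinfun_apply f i \<in> W i" using W(3) by auto
    then obtain d where "d > 0" "ball (blinfun_apply f i) d \<subseteq> W i"
      using W(2) open_contains_ball by blast
    then show "\<exists>d>0. \<forall>t. \<bar>t - blinfun_apply f i\<bar> < d \<longrightarrow> t \<in> W i"
      by (auto simp: dist_real_def subset_iff abs_minus_commute)
  qed
  then obtain d where d: "\<And>i. d i > 0" "\<And>i t. \<bar>t - blinfun_apply f i\<bar> < d i \<Longrightarrow> t \<in> W i"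
    by metis
  define \<delta> where "\<delta> = Min (insert 1 (d ` S))"
  have fS: "finite S" using W(1) S_def by simp
  have "\<delta> > 0" unfolding \<delta>_def using fS d(1) by auto
  moreover have "g \<in> U" if "\<forall>x\<in>S. \<bar>blinfun_apply g x - blinfun_apply f x\<bar> < \<delta>" for g
  proof -
    have "blinfun_apply g i \<in> W i" for i
    proof (cases "i \<in> S")
      case True
      have "\<delta> \<le> d i" unfolding \<delta>_def using fS True by auto
      then show ?thesis using that True d(2) by force
    next
      case False then show ?thesis by (simp add: S_def)
    qed
    then have "blinfun_apply g \<in> PiE UNIV W" by auto
    then show ?thesis using W(4) V(2) by auto
  qed
  ultimately show ?thesis using fS by blast
qed

lemma Hausdorff_weakstar: "Hausdorff_space weakstar"
  unfolding Hausdorff_space_def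
proof (intro allI impI)
  fix f g :: "'a::real_normed_vector \<Rightarrow>\<^sub>L real"
  assume "f \<in> topspace weakstar \<and> g \<in> topspace weakstar \<and> f \<noteq> g"
  then obtain x where x: "blinfun_apply f x \<noteq> blinfun_apply g x"
    by (meson blinfun_eqI)
  obtain A B where AB: "open A" "open B" "blinfun_apply f x \<in> A" "blinfun_apply g x \<in> B" "A \<inter> B = {}"
    using hausdorff[OF x] by blast
  let ?U = "{h \<in> topspace weakstar. blinfun_apply h x \<in> A}"
  let ?V = "{h \<in> topspace weakstar. blinfun_apply h x \<in> B}"
  have "openin weakstar ?U" "openin weakstar ?V"
    using openin_continuous_map_preimage[OF ws_eval] AB by auto
  then show "\<exists>U V. openin weakstar U \<and> openin weakstar V \<and> f \<in> U \<and> g \<in> V \<and> disjnt U V"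
    using AB by (intro exI[of _ ?U] exI[of _ ?V]) (auto simp: disjnt_def)
qed

lemma UBP:
  fixes A :: "('a::banach \<Rightarrow>\<^sub>L real) set"
  assumes pw: "\<And>x. \<exists>M. \<forall>a\<in>A. \<bar>blinfun_apply a x\<bar> \<le> M"
  shows "bounded A"
proof -
  define F where "F k = {x::'a. \<forall>a\<in>A. \<bar>blinfun_apply a x\<bar> \<le> real k}" for k :: nat
  have clF: "closed (F k)" for k
  proof -
    have "F k = (\<Inter>a\<in>A. {x. \<bar>blinfun_apply a x\<bar> \<le> real k})" by (auto simp: F_def)
    moreover have "closed {x. \<bar>blinfun_apply a x\<bar> \<le> real k}" for a
      by (intro closed_Collect_le continuous_intros)
    ultimately show ?thesis by auto
  qed
  have cover0: "UNIV \<subseteq> \<Union>(range F)"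
  proof
    fix x :: 'a
    obtain M where "\<forall>a\<in>A. \<bar>blinfun_apply a x\<bar> \<le> M" using pw by blast
    moreover obtain k :: nat where "M \<le> real k" using real_arch_simple by blast
    ultimately have "x \<in> F k" by (force simp: F_def)
    then show "x \<in> \<Union>(range F)" by blast
  qed
  then have cover: "\<Union>(range F) = UNIV" by blast
  have "\<exists>k. interior (F k) \<noteq> {}"
  proof (rule ccontr)
    assume "\<nexists>k. interior (F k) \<noteq> {}"
    then have "euclidean interior_of \<Union>(range F) = {}"
    proof (intro Baire_category_alt)
      show "completely_metrizable_space (euclidean::'a topology) \<or> locally_compact_space (euclidean::'a topology) \<and> regular_space (euclidean::'a topology)"
        using completely_metrizable_space_euclidean by blast
      show "countable (range F)" by simp
    next
      fix T assume "\<nexists>k. interior (F k) \<noteq> {}" "T \<in> range F"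
      then show "closedin euclidean T \<and> euclidean interior_of T = {}"
        using clF by auto
    qed
    then show False using cover by simp
  qed
  then obtain k x0 where "x0 \<in> interior (F k)" by blast
  then obtain r where r0: "r > 0" "ball x0 r \<subseteq> interior (F k)"
    using open_contains_ball open_interior by blast
  then have r: "r > 0" "ball x0 r \<subseteq> F k"
    using interior_subset by blast+
  have "norm a \<le> 4 * real k / r" if "a \<in> A" for a
  proof (rule norm_blinfun_bound)
    show "0 \<le> 4 * real k / r" using r by simp
    fix z :: 'a
    show "norm (blinfun_apply a z) \<le> 4 * real k / r * norm z"
    proof (cases "z = 0")
      case True then show ?thesis by (simp add: blinfun.zero_right)
    next
      case False
      define x where "x = (r / 2 / norm z) *\<^sub>R z"
      have nx: "norm x = r / 2" using False r by (simp add: x_def)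
      have "x0 \<in> ball x0 r" "x0 + x \<in> ball x0 r"
        using r nx by (auto simp: dist_norm)
      then have "x0 \<in> F k" "x0 + x \<in> F k"
        using r(2) by blast+
      then have "\<bar>blinfun_apply a x0\<bar> \<le> real k" "\<bar>blinfun_apply a (x0 + x)\<bar> \<le> real k"
        using that by (auto simp: F_def)
      then have "\<bar>blinfun_apply a x\<bar> \<le> 2 * real k"
        by (simp add: blinfun.add_right)
      moreover have "blinfun_apply a x = (r / 2 / norm z) * blinfun_apply a z"
        by (simp add: x_def blinfun.scaleR_right)
      ultimately have "(r / 2 / norm z) * \<bar>blinfun_apply a z\<bar> \<le> 2 * real k"
        using r False by (simp add: abs_mult)
      then have "\<bar>blinfun_apply a z\<bar> \<le> 2 * real k * (2 * norm z / r)"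
        using r False by (simp add: field_simps)
      then show ?thesis by (simp add: field_simps)
    qed
  qed
  then show ?thesis unfolding bounded_iff by blast
qed

definition linY :: "('a::real_normed_vector \<Rightarrow>\<^sub>L real) set \<Rightarrow> (('a \<Rightarrow>\<^sub>L real) \<Rightarrow> real) \<Rightarrow> bool" where
  "linY Y f \<longleftrightarrow> (\<forall>a b y z. y \<in> Y \<and> z \<in> Y \<longrightarrow> f (a *\<^sub>R y + b *\<^sub>R z) = a * f y + b * f z)"

lemma linY_D: "linY Y f \<Longrightarrow> y \<in> Y \<Longrightarrow> z \<in> Y \<Longrightarrow> f (a *\<^sub>R y + b *\<^sub>R z) = a * f y + b * f z"
  unfolding linY_def by blast

lemma linY_scale: "linY Y f \<Longrightarrow> y \<in> Y \<Longrightarrow> f (a *\<^sub>R y) = a * f y"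
  using linY_D[of Y f y y a 0] by simp

lemma linY_diff: "linY Y f \<Longrightarrow> y \<in> Y \<Longrightarrow> z \<in> Y \<Longrightarrow> f (y - z) = f y - f z"
  using linY_D[of Y f y z 1 "-1"] by simp

lemma linY_add: "linY Y f \<Longrightarrow> y \<in> Y \<Longrightarrow> z \<in> Y \<Longrightarrow> f (y + z) = f y + f z"
  using linY_D[of Y f y z 1 1] by simp

lemma linY_zero: "linY Y f \<Longrightarrow> y \<in> Y \<Longrightarrow> f 0 = 0"
  using linY_scale[of Y f y 0] by simp

lemma linY_minus_s:
  assumes Y: "subspace Y" and f: "linY Y f" and g: "\<And>y. y \<in> Y \<Longrightarrow> g y = f y - c * blinfun_apply y s"
  shows "linY Y g"
  unfolding linY_def
proof (intro allI impI)
  fix a b y z assume yz: "y \<in> Y \<and> z \<in> Y"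
  then have "a *\<^sub>R y + b *\<^sub>R z \<in> Y" using Y by (simp add: subspace_add subspace_scale)
  then have "g (a *\<^sub>R y + b *\<^sub>R z) = f (a *\<^sub>R y + b *\<^sub>R z) - c * blinfun_apply (a *\<^sub>R y + b *\<^sub>R z) s"
    using g by blast
  also have "\<dots> = a * f y + b * f z - c * (a * blinfun_apply y s + b * blinfun_apply z s)"
    using linY_D[OF f, of y z a b] yz by (simp add: blinfun.add_left blinfun.scaleR_left)
  also have "\<dots> = a * g y + b * g z"
  proof -
    have gy: "f y = g y + c * blinfun_apply y s" "f z = g z + c * blinfun_apply z s"
      using g[of y] g[of z] yz by auto
    show ?thesis by (simp add: gy algebra_simps)
  qed
  finally show "g (a *\<^sub>R y + b *\<^sub>R z) = a * g y + b * g z" .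
qed

lemma kernel_eval:
  assumes "finite S" "subspace Y"
  shows "linY Y \<phi> \<Longrightarrow> (\<forall>y\<in>Y. (\<forall>x\<in>S. blinfun_apply y x = 0) \<longrightarrow> \<phi> y = 0)
           \<Longrightarrow> \<exists>x0. \<forall>y\<in>Y. \<phi> y = blinfun_apply y x0"
  using assms(1)
proof (induction S arbitrary: \<phi> rule: finite_induct)
  case empty
  then show ?case by (intro exI[of _ 0]) (simp add: blinfun.zero_right)
next
  case (insert s S)
  show ?case
  proof (cases "\<exists>y0\<in>Y. (\<forall>x\<in>S. blinfun_apply y0 x = 0) \<and> blinfun_apply y0 s \<noteq> 0")
    case True
    then obtain y0 where y0: "y0 \<in> Y" "\<forall>x\<in>S. blinfun_apply y0 x = 0" "blinfun_apply y0 s \<noteq> 0" by blast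
    define y1 where "y1 = (1 / blinfun_apply y0 s) *\<^sub>R y0"
    have y1: "y1 \<in> Y" "\<forall>x\<in>S. blinfun_apply y1 x = 0" "blinfun_apply y1 s = 1"
      using y0 assms(2) by (auto simp: y1_def subspace_scale blinfun.scaleR_left)
    define \<phi>' where "\<phi>' y = \<phi> y - \<phi> y1 * blinfun_apply y s" for y
    have lin': "linY Y \<phi>'"
      by (rule linY_minus_s[OF assms(2) insert.prems(1)]) (simp add: \<phi>'_def mult.commute)
    have ker': "\<forall>y\<in>Y. (\<forall>x\<in>S. blinfun_apply y x = 0) \<longrightarrow> \<phi>' y = 0"
    proof (intro ballI impI)
      fix y assume yY: "y \<in> Y" and yS: "\<forall>x\<in>S. blinfun_apply y x = 0"
      define z where "z = y - blinfun_apply y s *\<^sub>R y1"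
      have zY: "z \<in> Y" using yY y1 assms(2) by (simp add: z_def subspace_diff subspace_scale)
      have "\<forall>x\<in>insert s S. blinfun_apply z x = 0"
        using yS y1 by (auto simp: z_def blinfun.diff_left blinfun.scaleR_left)
      then have "\<phi> z = 0" using insert.prems(2) zY by blast
      moreover have "\<phi> z = \<phi> y - blinfun_apply y s * \<phi> y1"
        using linY_D[OF insert.prems(1) yY y1(1), of 1 "- blinfun_apply y s"] by (simp add: z_def)
      ultimately show "\<phi>' y = 0" by (simp add: \<phi>'_def mult.commute)
    qed
    obtain x1 where x1: "\<forall>y\<in>Y. \<phi>' y = blinfun_apply y x1"
      using insert.IH[OF lin' ker'] by blast
    show ?thesis
      by (intro exI[of _ "x1 + \<phi> y1 *\<^sub>R s"])
         (use x1 in \<open>auto simp: \<phi>'_def blinfun.add_right blinfun.scaleR_right algebra_simps\<close>)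
  next
    case False
    have "\<forall>y\<in>Y. (\<forall>x\<in>S. blinfun_apply y x = 0) \<longrightarrow> \<phi> y = 0"
      using False insert.prems(2) by auto
    then show ?thesis using insert.IH[OF insert.prems(1)] by blast
  qed
qed

lemma cont_eval:
  assumes Y: "subspace Y" and lin: "linY Y \<phi>"
    and cont: "continuous_map (subtopology weakstar Y) euclideanreal \<phi>"
  shows "\<exists>x0. \<forall>y\<in>Y. \<phi> y = blinfun_apply y x0"
proof -
  have 0: "0 \<in> Y" using Y subspace_0 by blast
  have phi0: "\<phi> 0 = 0" using linY_zero[OF lin 0] .
  have "openin (subtopology weakstar Y) {y \<in> topspace (subtopology weakstar Y). \<phi> y \<in> {-1<..<1}}"
    using openin_continuous_map_preimage[OF cont, of "{-1<..<1}"] by simp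
  then have "\<exists>T. openin weakstar T \<and> {y \<in> Y. \<phi> y \<in> {-1<..<1}} = T \<inter> Y"
    by (simp add: openin_subtopology)
  then obtain U where U: "openin weakstar U" "{y \<in> Y. \<phi> y \<in> {-1<..<1}} = U \<inter> Y"
    by metis
  have Ueq: "\<forall>y\<in>Y. (-1 < \<phi> y \<and> \<phi> y < 1) \<longleftrightarrow> y \<in> U"
  proof
    fix y assume yY: "y \<in> Y"
    have "y \<in> {y \<in> Y. \<phi> y \<in> {-1<..<1}} \<longleftrightarrow> y \<in> U \<inter> Y"
      by (simp only: U(2))
    then show "(-1 < \<phi> y \<and> \<phi> y < 1) \<longleftrightarrow> y \<in> U" using yY by simp
  qed
  have "(-1 < \<phi> 0 \<and> \<phi> 0 < 1) \<longleftrightarrow> 0 \<in> U" using Ueq 0 by blast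
  then have "0 \<in> U" using phi0 by simp
  obtain S \<delta> where S: "finite S" "\<delta> > 0"
      "\<forall>g. (\<forall>x\<in>S. \<bar>blinfun_apply g x - blinfun_apply 0 x\<bar> < \<delta>) \<longrightarrow> g \<in> U"
    using ws_open_nbhd[OF U(1) \<open>0 \<in> U\<close>] by blast
  have "\<forall>y\<in>Y. (\<forall>x\<in>S. blinfun_apply y x = 0) \<longrightarrow> \<phi> y = 0"
  proof (intro ballI impI)
    fix y assume yY: "y \<in> Y" and yS: "\<forall>x\<in>S. blinfun_apply y x = 0"
    show "\<phi> y = 0"
    proof (rule ccontr)
      assume ne: "\<phi> y \<noteq> 0"
      define t where "t = 2 / \<phi> y"
      have "\<forall>x\<in>S. \<bar>blinfun_apply (t *\<^sub>R y) x - blinfun_apply 0 x\<bar> < \<delta>"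
        using yS S(2) by (simp add: blinfun.scaleR_left)
      then have "t *\<^sub>R y \<in> U" using S(3) by blast
      moreover have "t *\<^sub>R y \<in> Y" using yY Y by (simp add: subspace_scale)
      ultimately have "-1 < \<phi> (t *\<^sub>R y) \<and> \<phi> (t *\<^sub>R y) < 1" using Ueq by blast
      moreover have "\<phi> (t *\<^sub>R y) = 2" using linY_scale[OF lin yY, of t] ne by (simp add: t_def)
      ultimately show False by simp
    qed
  qed
  then show ?thesis using kernel_eval[OF S(1) Y lin] by blast
qed

lemma eval_cont:
  assumes "\<forall>y\<in>Y. \<phi> y = blinfun_apply y x0"
  shows "continuous_map (subtopology weakstar Y) euclideanreal \<phi>"
proof -
  have "continuous_map (subtopology weakstar Y) euclideanreal (\<lambda>y. blinfun_apply y x0)"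
    by (rule continuous_map_from_subtopology[OF ws_eval])
  then show ?thesis
    by (rule continuous_map_eq) (use assms in auto)
qed

lemma strip2d:
  fixes D :: "(real \<times> real) set" and \<eta> :: real
  assumes sym: "\<And>u t. (u, t) \<in> D \<Longrightarrow> (-u, -t) \<in> D"
    and conv: "\<And>u t v r l. (u, t) \<in> D \<Longrightarrow> (v, r) \<in> D \<Longrightarrow> 0 \<le> l \<Longrightarrow> l \<le> 1
                 \<Longrightarrow> l * u + (1 - l) * v = 0 \<Longrightarrow> l * t + (1 - l) * r \<le> \<eta>"
  shows "\<exists>c. \<forall>u t. (u, t) \<in> D \<longrightarrow> \<bar>t - c * u\<bar> \<le> \<eta>"
proof -
  have key: "(r - \<eta>) / v \<le> (\<eta> - t) / (- u)"
    if "(u, t) \<in> D" "(v, r) \<in> D" "v > 0" "u < 0" for u t v r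
  proof -
    define l where "l = v / (v - u)"
    have l: "0 \<le> l" "l \<le> 1" using that by (auto simp: l_def field_simps)
    have "l * u + (1 - l) * v = 0" using that by (simp add: l_def field_simps)
    then have "l * t + (1 - l) * r \<le> \<eta>" using conv[OF that(1,2) l] by blast
    moreover have vu: "v - u > 0" using that by simp
    moreover have "(l * t + (1 - l) * r) * (v - u) = v * t - u * r"
    proof -
      have l1: "l * (v - u) = v" using vu by (simp add: l_def)
      have l2: "(1 - l) * (v - u) = - u" using l1 by (simp add: algebra_simps)
      have "(l * t + (1 - l) * r) * (v - u) = t * (l * (v - u)) + r * ((1 - l) * (v - u))"
        by (simp add: algebra_simps)
      then show ?thesis by (simp add: l1 l2)
    qed
    ultimately have "v * t - u * r \<le> \<eta> * (v - u)"
      by (metis mult_right_mono less_imp_le)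
    moreover have "0 < - u" using that by simp
    ultimately show ?thesis using that by (simp add: field_simps)
  qed
  define P where "P = {(r - \<eta>) / v | v r. (v, r) \<in> D \<and> v > 0}"
  define c where "c = (if P = {} then 0 else Sup P)"
  have up: "t \<le> \<eta> + c * u" if "(u, t) \<in> D" for u t
  proof -
    consider "u = 0" | "u > 0" | "u < 0" by linarith
    then show ?thesis
    proof cases
      case 1
      then show ?thesis using conv[OF that that, of 1] by simp
    next
      case 2
      have inP: "(t - \<eta>) / u \<in> P" using that 2 by (auto simp: P_def)
      have mp: "(-u, -t) \<in> D" using sym that by blast
      have bdd: "bdd_above P"
        unfolding bdd_above_def P_def using key[OF mp] 2 by auto
      have "(t - \<eta>) / u \<le> c" using inP bdd by (auto simp: c_def intro: cSup_upper)
      then show ?thesis using 2 by (simp add: field_simps)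
    next
      case 3
      have mp: "(-u, -t) \<in> D" using sym that by blast
      have ne: "P \<noteq> {}" using mp 3 by (auto simp: P_def)
      have "Sup P \<le> (\<eta> - t) / (- u)"
      proof (rule cSup_least[OF ne])
        fix p assume "p \<in> P"
        then obtain v r where vr: "p = (r - \<eta>) / v" "(v, r) \<in> D" "v > 0" by (auto simp: P_def)
        show "p \<le> (\<eta> - t) / (- u)" using key[OF that vr(2) vr(3) 3] vr(1) by simp
      qed
      then have "c * (- u) \<le> \<eta> - t" using ne 3 by (simp add: c_def field_simps)
      then show ?thesis by (simp add: algebra_simps)
    qed
  qed
  have "\<bar>t - c * u\<bar> \<le> \<eta>" if "(u, t) \<in> D" for u t
    using up[OF that] up[OF sym[OF that]] by (simp add: abs_le_iff)
  then show ?thesis by blast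
qed

lemma approx_fin:
  assumes "finite S" and KY: "K \<subseteq> Y" and cK: "convex K" and sK: "\<forall>y\<in>K. - y \<in> K"
    and Y: "subspace Y"
  shows "linY Y \<psi> \<Longrightarrow> (\<forall>y\<in>K. (\<forall>x\<in>S. blinfun_apply y x = 0) \<longrightarrow> \<bar>\<psi> y\<bar> \<le> \<eta>)
          \<Longrightarrow> \<exists>x0. \<forall>y\<in>K. \<bar>\<psi> y - blinfun_apply y x0\<bar> \<le> \<eta>"
  using assms(1)
proof (induction S arbitrary: \<psi> rule: finite_induct)
  case empty
  then show ?case by (intro exI[of _ 0]) (simp add: blinfun.zero_right)
next
  case (insert s S)
  define K' where "K' = {y \<in> K. \<forall>x\<in>S. blinfun_apply y x = 0}"
  define D where "D = (\<lambda>y. (blinfun_apply y s, \<psi> y)) ` K'"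
  have "\<exists>c. \<forall>u t. (u, t) \<in> D \<longrightarrow> \<bar>t - c * u\<bar> \<le> \<eta>"
  proof (rule strip2d)
    fix u t assume "(u, t) \<in> D"
    then obtain y where y: "y \<in> K'" "u = blinfun_apply y s" "t = \<psi> y" by (auto simp: D_def)
    have "- y \<in> K'" using y(1) sK by (auto simp: K'_def blinfun.minus_left)
    moreover have "\<psi> (- y) = - \<psi> y"
      using linY_scale[OF insert.prems(1), of y "-1"] y(1) KY by (auto simp: K'_def)
    ultimately show "(- u, - t) \<in> D" using y by (auto simp: D_def blinfun.minus_left image_iff intro!: bexI[of _ "-y"])
  next
    fix u t v r l :: real
    assume "(u, t) \<in> D" "(v, r) \<in> D" and l: "0 \<le> l" "l \<le> 1" and z: "l * u + (1 - l) * v = 0"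
    then obtain y1 y2 where y: "y1 \<in> K'" "u = blinfun_apply y1 s" "t = \<psi> y1"
        "y2 \<in> K'" "v = blinfun_apply y2 s" "r = \<psi> y2" by (auto simp: D_def)
    define w where "w = l *\<^sub>R y1 + (1 - l) *\<^sub>R y2"
    have "w \<in> K" using y(1,4) l cK by (auto simp: K'_def w_def intro!: convexD)
    moreover have "\<forall>x\<in>insert s S. blinfun_apply w x = 0"
      using y z by (auto simp: K'_def w_def blinfun.add_left blinfun.scaleR_left)
    ultimately have "\<bar>\<psi> w\<bar> \<le> \<eta>" using insert.prems(2) by blast
    moreover have "\<psi> w = l * t + (1 - l) * r"
      using linY_D[OF insert.prems(1), of y1 y2 l "1 - l"] y KY by (auto simp: K'_def w_def)
    ultimately show "l * t + (1 - l) * r \<le> \<eta>" by simp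
  qed
  then obtain c where c: "\<forall>u t. (u, t) \<in> D \<longrightarrow> \<bar>t - c * u\<bar> \<le> \<eta>" by blast
  define \<psi>' where "\<psi>' y = \<psi> y - c * blinfun_apply y s" for y
  have lin': "linY Y \<psi>'"
    by (rule linY_minus_s[OF Y insert.prems(1)]) (simp add: \<psi>'_def)
  have "\<forall>y\<in>K. (\<forall>x\<in>S. blinfun_apply y x = 0) \<longrightarrow> \<bar>\<psi>' y\<bar> \<le> \<eta>"
  proof (intro ballI impI)
    fix y assume "y \<in> K" "\<forall>x\<in>S. blinfun_apply y x = 0"
    then have "(blinfun_apply y s, \<psi> y) \<in> D" by (auto simp: D_def K'_def)
    then show "\<bar>\<psi>' y\<bar> \<le> \<eta>" using c by (simp add: \<psi>'_def)
  qed
  then obtain x1 where x1: "\<forall>y\<in>K. \<bar>\<psi>' y - blinfun_apply y x1\<bar> \<le> \<eta>"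
    using insert.IH[OF lin'] by blast
  show ?case
    by (intro exI[of _ "x1 + c *\<^sub>R s"])
       (use x1 in \<open>auto simp: \<psi>'_def blinfun.add_right blinfun.scaleR_right algebra_simps\<close>)
qed

lemma cont_eps:
  assumes "\<And>x e. x \<in> topspace X \<Longrightarrow> e > 0 \<Longrightarrow> \<exists>U. openin X U \<and> x \<in> U \<and> (\<forall>y\<in>U. \<bar>f y - f x\<bar> < e)"
  shows "continuous_map X euclideanreal f"
  unfolding continuous_map_upper_lower_semicontinuous_lt
proof (intro allI conjI)
  fix a :: real
  show "openin X {x \<in> topspace X. a < f x}"
  proof (subst openin_subopen, intro ballI)
    fix x assume x: "x \<in> {x \<in> topspace X. a < f x}"
    then obtain U where U: "openin X U" "x \<in> U" "\<forall>y\<in>U. \<bar>f y - f x\<bar> < f x - a"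
      using assms[of x "f x - a"] by auto
    have "U \<subseteq> {x \<in> topspace X. a < f x}"
      using U openin_subset[OF U(1)] by force
    then show "\<exists>T. openin X T \<and> x \<in> T \<and> T \<subseteq> {x \<in> topspace X. a < f x}"
      using U by blast
  qed
  show "openin X {x \<in> topspace X. f x < a}"
  proof (subst openin_subopen, intro ballI)
    fix x assume x: "x \<in> {x \<in> topspace X. f x < a}"
    then obtain U where U: "openin X U" "x \<in> U" "\<forall>y\<in>U. \<bar>f y - f x\<bar> < a - f x"
      using assms[of x "a - f x"] by auto
    have "U \<subseteq> {x \<in> topspace X. f x < a}"
      using U openin_subset[OF U(1)] by force
    then show "\<exists>T. openin X T \<and> x \<in> T \<and> T \<subseteq> {x \<in> topspace X. f x < a}"
      using U by blast
  qed
qed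

lemma real_cauchy_lim:
  fixes g :: "'b \<Rightarrow> real"
  assumes F: "F \<noteq> bot"
    and C: "\<And>e. e > 0 \<Longrightarrow> \<exists>P. eventually P F \<and> (\<forall>x x'. P x \<and> P x' \<longrightarrow> \<bar>g x - g x'\<bar> < e)"
  shows "\<exists>l. (g \<longlongrightarrow> l) F"
proof -
  have "cauchy_filter (filtermap g F)"
    unfolding cauchy_filter_metric_filtermap using C by (simp add: dist_real_def)
  moreover have "filtermap g F \<noteq> bot" using F by (simp add: filtermap_bot_iff)
  moreover have "filtermap g F \<le> principal UNIV" by simp
  ultimately obtain l where "filtermap g F \<le> nhds l"
    using complete_UNIV unfolding complete_uniform by blast
  then show ?thesis unfolding filterlim_def by blast
qed

lemma mk_D:
  assumes "K \<in> mackey_sets Y"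
  shows "K \<subseteq> Y" "convex K" "\<And>t y. \<bar>t\<bar> \<le> 1 \<Longrightarrow> y \<in> K \<Longrightarrow> t *\<^sub>R y \<in> K"
    "compactin weakstar K" "closedin weakstar K"
proof -
  show "K \<subseteq> Y" "convex K" "\<And>t y. \<bar>t\<bar> \<le> 1 \<Longrightarrow> y \<in> K \<Longrightarrow> t *\<^sub>R y \<in> K"
    using assms by (auto simp: mackey_sets_def)
  show c: "compactin weakstar K"
    using assms by (auto simp: mackey_sets_def compactin_subtopology)
  show "closedin weakstar K"
    by (rule compactin_imp_closedin[OF Hausdorff_weakstar c])
qed

lemma mk_neg: "K \<in> mackey_sets Y \<Longrightarrow> y \<in> K \<Longrightarrow> - y \<in> K"
  using mk_D(3)[of K Y "-1" y] by simp

lemma mk_zero: "K \<in> mackey_sets Y \<Longrightarrow> y \<in> K \<Longrightarrow> 0 \<in> K"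
  using mk_D(3)[of K Y 0 y] by simp

lemma mk_empty: "{} \<in> mackey_sets Y"
  by (simp add: mackey_sets_def)

lemma mk_bounded:
  fixes K :: "('a::banach \<Rightarrow>\<^sub>L real) set"
  assumes "K \<in> mackey_sets Y"
  shows "bounded K"
proof (rule UBP)
  fix x
  have "compactin euclideanreal ((\<lambda>y. blinfun_apply y x) ` K)"
    by (rule image_compactin[OF mk_D(4)[OF assms] ws_eval])
  then have "bounded ((\<lambda>y. blinfun_apply y x) ` K)"
    by (simp add: compact_imp_bounded)
  then obtain M where "\<forall>z\<in>(\<lambda>y. blinfun_apply y x) ` K. norm z \<le> M"
    unfolding bounded_iff by blast
  then show "\<exists>M. \<forall>a\<in>K. \<bar>blinfun_apply a x\<bar> \<le> M" by auto
qed

lemma mk_seg: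
  assumes Y: "subspace Y" and y: "y \<in> Y"
  shows "(\<lambda>t. t *\<^sub>R y) ` {-1..1} \<in> mackey_sets Y"
  unfolding mackey_sets_def
proof (intro CollectI conjI allI impI)
  show sub: "(\<lambda>t. t *\<^sub>R y) ` {-1..1} \<subseteq> Y" using Y y by (auto simp: subspace_scale)
  show "convex ((\<lambda>t. t *\<^sub>R y) ` {-1..1})"
    by (rule convex_linear_image) (auto intro: linear_scaleR_left)
  fix t :: real and z assume "\<bar>t\<bar> \<le> 1 \<and> z \<in> (\<lambda>t. t *\<^sub>R y) ` {-1..1}"
  then obtain s where "\<bar>t\<bar> \<le> 1" "s \<in> {-1..1}" "z = s *\<^sub>R y" by auto
  moreover have "\<bar>t * s\<bar> \<le> 1" using calculation
    by (simp add: abs_mult) (metis abs_le_iff atLeastAtMost_iff minus_le_iff mult_le_one abs_ge_zero)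
  ultimately show "t *\<^sub>R z \<in> (\<lambda>t. t *\<^sub>R y) ` {-1..1}"
    by (auto simp: image_iff abs_le_iff intro!: bexI[of _ "t * s"])
next
  have "continuous_map euclideanreal weakstar (\<lambda>t. t *\<^sub>R y)"
    unfolding ws_cont_iff by (simp add: blinfun.scaleR_left continuous_intros)
  then have "compactin weakstar ((\<lambda>t. t *\<^sub>R y) ` {-1..1})"
    by (rule image_compactin[rotated]) simp
  then show "compactin (subtopology weakstar Y) ((\<lambda>t. t *\<^sub>R y) ` {-1..1})"
    using Y y by (auto simp: compactin_subtopology subspace_scale)
qed

lemma mk_seg_mem: "(y::'a::real_vector) \<in> (\<lambda>t. t *\<^sub>R y) ` {-1..1}"
  by (rule image_eqI[of _ _ 1]) simp_all

definition Gc :: "('a::real_normed_vector \<Rightarrow>\<^sub>L real) set \<Rightarrow> (('a \<Rightarrow>\<^sub>L real) \<Rightarrow> real) \<Rightarrow> bool" where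
  "Gc Y \<phi> \<longleftrightarrow> (\<forall>K\<in>mackey_sets Y. continuous_map (subtopology weakstar K) euclideanreal \<phi>)"

definition Ev :: "('a::real_normed_vector \<Rightarrow>\<^sub>L real) set \<Rightarrow> (('a \<Rightarrow>\<^sub>L real) \<Rightarrow> real) \<Rightarrow> bool" where
  "Ev Y \<phi> \<longleftrightarrow> (\<exists>x0. \<forall>y\<in>Y. \<phi> y = blinfun_apply y x0)"

lemma cauchy_K:
  assumes C: "mackey_cauchy Y F" and K: "K \<in> mackey_sets Y" and e: "e > 0"
  shows "\<exists>Q. eventually Q F \<and> (\<forall>x x'. Q x \<and> Q x' \<longrightarrow> (\<forall>y\<in>K. \<bar>blinfun_apply y (x - x')\<bar> < e))"
proof -
  have "\<forall>\<^sub>F (x, x') in F \<times>\<^sub>F F. \<forall>y\<in>K. \<bar>blinfun_apply y (x - x')\<bar> < e"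
    using C K e unfolding mackey_cauchy_def by blast
  then obtain Q where "eventually Q F" "\<forall>x x'. Q x \<longrightarrow> Q x' \<longrightarrow> (\<forall>y\<in>K. \<bar>blinfun_apply y (x - x')\<bar> < e)"
    unfolding eventually_prod_same by auto
  then show ?thesis by blast
qed

lemma complete_of_G:
  fixes Y :: "('a::banach \<Rightarrow>\<^sub>L real) set"
  assumes Y: "subspace Y" and H: "\<forall>\<phi>. linY Y \<phi> \<and> Gc Y \<phi> \<longrightarrow> Ev Y \<phi>"
  shows "mackey_complete Y"
  unfolding mackey_complete_def
proof (intro allI impI)
  fix F :: "'a filter"
  assume "F \<noteq> bot \<and> mackey_cauchy Y F"
  then have F: "F \<noteq> bot" and C: "mackey_cauchy Y F" by auto
  define \<phi> :: "('a \<Rightarrow>\<^sub>L real) \<Rightarrow> real" where "\<phi> y = Lim F (\<lambda>x. blinfun_apply y x)" for y :: "'a \<Rightarrow>\<^sub>L real"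
  have lim: "((\<lambda>x. blinfun_apply y x) \<longlongrightarrow> \<phi> y) F" if yY: "y \<in> Y" for y
  proof -
    have "\<exists>l. ((\<lambda>x. blinfun_apply y x) \<longlongrightarrow> l) F"
    proof (rule real_cauchy_lim[OF F])
      fix e :: real assume e: "e > 0"
      obtain Q where Q: "eventually Q F"
          "\<forall>x x'. Q x \<and> Q x' \<longrightarrow> (\<forall>z\<in>(\<lambda>t. t *\<^sub>R y) ` {-1..1}. \<bar>blinfun_apply z (x - x')\<bar> < e)"
        using cauchy_K[OF C mk_seg[OF Y yY] e] by blast
      have yin: "y \<in> (\<lambda>t. t *\<^sub>R y) ` {-1..1}" by (rule mk_seg_mem)
      have "\<forall>x x'. Q x \<and> Q x' \<longrightarrow> \<bar>blinfun_apply y x - blinfun_apply y x'\<bar> < e"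
      proof (intro allI impI)
        fix x x' assume "Q x \<and> Q x'"
        then have "\<bar>blinfun_apply y (x - x')\<bar> < e" using Q(2) yin by blast
        then show "\<bar>blinfun_apply y x - blinfun_apply y x'\<bar> < e" by (simp add: blinfun.diff_right)
      qed
      then show "\<exists>P. eventually P F \<and> (\<forall>x x'. P x \<and> P x' \<longrightarrow> \<bar>blinfun_apply y x - blinfun_apply y x'\<bar> < e)"
        using Q(1) by blast
    qed
    then obtain l where "((\<lambda>x. blinfun_apply y x) \<longlongrightarrow> l) F" by blast
    moreover have "\<phi> y = l" unfolding \<phi>_def using F calculation by (simp add: tendsto_Lim)
    ultimately show ?thesis by simp
  qed
  have unif: "eventually (\<lambda>x. \<forall>y\<in>K. \<bar>blinfun_apply y x - \<phi> y\<bar> \<le> e) F"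
    if K: "K \<in> mackey_sets Y" and e: "e > 0" for K e
  proof -
    obtain Q where Q: "eventually Q F"
        "\<forall>x x'. Q x \<and> Q x' \<longrightarrow> (\<forall>y\<in>K. \<bar>blinfun_apply y (x - x')\<bar> < e)"
      using cauchy_K[OF C K e] by blast
    show ?thesis
    proof (rule eventually_mono[OF Q(1)], intro ballI)
      fix x y assume Qx: "Q x" and yK: "y \<in> K"
      have yY: "y \<in> Y" using mk_D(1)[OF K] yK by blast
      have "((\<lambda>x'. \<bar>blinfun_apply y x - blinfun_apply y x'\<bar>) \<longlongrightarrow> \<bar>blinfun_apply y x - \<phi> y\<bar>) F"
        by (intro tendsto_intros lim[OF yY])
      moreover have "eventually (\<lambda>x'. e \<ge> \<bar>blinfun_apply y x - blinfun_apply y x'\<bar>) F"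
      proof (rule eventually_mono[OF Q(1)])
        fix x' assume "Q x'"
        then have "\<bar>blinfun_apply y (x - x')\<bar> < e" using Q(2) Qx yK by blast
        then show "e \<ge> \<bar>blinfun_apply y x - blinfun_apply y x'\<bar>" by (simp add: blinfun.diff_right)
      qed
      ultimately show "\<bar>blinfun_apply y x - \<phi> y\<bar> \<le> e"
        using F tendsto_upperbound by blast
    qed
  qed
  have lin: "linY Y \<phi>"
    unfolding linY_def
  proof (intro allI impI)
    fix a b y z assume yz: "y \<in> Y \<and> z \<in> Y"
    then have "a *\<^sub>R y + b *\<^sub>R z \<in> Y" using Y by (simp add: subspace_add subspace_scale)
    then have l1: "((\<lambda>x. blinfun_apply (a *\<^sub>R y + b *\<^sub>R z) x) \<longlongrightarrow> \<phi> (a *\<^sub>R y + b *\<^sub>R z)) F"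
      by (rule lim)
    have "((\<lambda>x. a * blinfun_apply y x + b * blinfun_apply z x) \<longlongrightarrow> a * \<phi> y + b * \<phi> z) F"
      using yz by (intro tendsto_intros lim) auto
    then have l2: "((\<lambda>x. blinfun_apply (a *\<^sub>R y + b *\<^sub>R z) x) \<longlongrightarrow> a * \<phi> y + b * \<phi> z) F"
      by (simp add: blinfun.add_left blinfun.scaleR_left)
    show "\<phi> (a *\<^sub>R y + b *\<^sub>R z) = a * \<phi> y + b * \<phi> z"
      using tendsto_unique[OF F l1 l2] .
  qed
  have G: "Gc Y \<phi>"
    unfolding Gc_def
  proof
    fix K assume K: "K \<in> mackey_sets Y"
    show "continuous_map (subtopology weakstar K) euclideanreal \<phi>"
    proof (rule cont_eps)
      fix y0 and e :: real assume y0: "y0 \<in> topspace (subtopology weakstar K)" and e: "e > 0"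
      have e3: "e / 3 > 0" using e by simp
      obtain x where x: "\<forall>y\<in>K. \<bar>blinfun_apply y x - \<phi> y\<bar> \<le> e / 3"
        using eventually_happens'[OF F unif[OF K e3]] by blast
      define U where "U = {z \<in> topspace (subtopology weakstar K). blinfun_apply z x \<in> ball (blinfun_apply y0 x) (e / 3)}"
      have "openin (subtopology weakstar K) U"
        unfolding U_def
        by (rule openin_continuous_map_preimage[OF continuous_map_from_subtopology[OF ws_eval]]) simp
      moreover have "y0 \<in> U" using y0 e by (simp add: U_def)
      moreover have "\<forall>y\<in>U. \<bar>\<phi> y - \<phi> y0\<bar> < e"
      proof
        fix y assume "y \<in> U"
        then have yK: "y \<in> K" and d: "\<bar>blinfun_apply y x - blinfun_apply y0 x\<bar> < e / 3"
          by (auto simp: U_def dist_real_def abs_minus_commute)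
        have "y0 \<in> K" using y0 by simp
        then have "\<bar>blinfun_apply y0 x - \<phi> y0\<bar> \<le> e / 3" using x by blast
        moreover have "\<bar>blinfun_apply y x - \<phi> y\<bar> \<le> e / 3" using x yK by blast
        ultimately show "\<bar>\<phi> y - \<phi> y0\<bar> < e" using d by linarith
      qed
      ultimately show "\<exists>U. openin (subtopology weakstar K) U \<and> y0 \<in> U \<and> (\<forall>y\<in>U. \<bar>\<phi> y - \<phi> y0\<bar> < e)"
        by blast
    qed
  qed
  obtain x0 where x0: "\<forall>y\<in>Y. \<phi> y = blinfun_apply y x0"
    using H lin G unfolding Ev_def by blast
  have "mackey_converges Y F x0"
    unfolding mackey_converges_def
  proof (intro ballI allI impI)
    fix K and e :: real assume K: "K \<in> mackey_sets Y" and e: "e > 0"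
    show "\<forall>\<^sub>F x in F. \<forall>y\<in>K. \<bar>blinfun_apply y (x - x0)\<bar> < e"
    proof (rule eventually_mono[OF unif[OF K, of "e/2"]])
      show "e / 2 > 0" using e by simp
    next
      fix x assume H2: "\<forall>y\<in>K. \<bar>blinfun_apply y x - \<phi> y\<bar> \<le> e / 2"
      show "\<forall>y\<in>K. \<bar>blinfun_apply y (x - x0)\<bar> < e"
      proof
        fix y assume yK: "y \<in> K"
        then have "y \<in> Y" using mk_D(1)[OF K] by blast
        then have "\<phi> y = blinfun_apply y x0" using x0 by blast
        then show "\<bar>blinfun_apply y (x - x0)\<bar> < e"
          using H2 yK e by (auto simp: blinfun.diff_right)
      qed
    qed
  qed
  then show "\<exists>x0. mackey_converges Y F x0" by blast
qed

lemma mk_insert0: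
  assumes K: "K \<in> mackey_sets Y" and Y: "subspace Y"
  shows "insert 0 K \<in> mackey_sets Y"
proof (cases "K = {}")
  case True
  have "0 \<in> Y" using Y subspace_0 by blast
  then show ?thesis using True by (simp add: mackey_sets_def)
next
  case False
  then obtain y where "y \<in> K" by blast
  then have "0 \<in> K" using mk_zero[OF K] by blast
  then show ?thesis using K by (simp add: insert_absorb)
qed

lemma mk_plus:
  assumes K1: "K1 \<in> mackey_sets Y" and K2: "K2 \<in> mackey_sets Y" and Y: "subspace Y"
  shows "(\<lambda>p. fst p + snd p) ` (K1 \<times> K2) \<in> mackey_sets Y"
  unfolding mackey_sets_def
proof (intro CollectI conjI allI impI)
  show "(\<lambda>p. fst p + snd p) ` (K1 \<times> K2) \<subseteq> Y"
    using mk_D(1)[OF K1] mk_D(1)[OF K2] by (auto intro!: subspace_add[OF Y])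
  show "convex ((\<lambda>p. fst p + snd p) ` (K1 \<times> K2))"
  proof (rule convexI)
    fix p q and u v :: real
    assume p: "p \<in> (\<lambda>p. fst p + snd p) ` (K1 \<times> K2)" and q: "q \<in> (\<lambda>p. fst p + snd p) ` (K1 \<times> K2)"
      and uv: "0 \<le> u" "0 \<le> v" "u + v = 1"
    obtain a1 b1 where ab1: "a1 \<in> K1" "b1 \<in> K2" "p = a1 + b1" using p by auto
    obtain a2 b2 where ab2: "a2 \<in> K1" "b2 \<in> K2" "q = a2 + b2" using q by auto
    have "u *\<^sub>R a1 + v *\<^sub>R a2 \<in> K1" using mk_D(2)[OF K1] ab1 ab2 uv by (simp add: convexD)
    moreover have "u *\<^sub>R b1 + v *\<^sub>R b2 \<in> K2" using mk_D(2)[OF K2] ab1 ab2 uv by (simp add: convexD)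
    moreover have "u *\<^sub>R p + v *\<^sub>R q = (u *\<^sub>R a1 + v *\<^sub>R a2) + (u *\<^sub>R b1 + v *\<^sub>R b2)"
      using ab1 ab2 by (simp add: algebra_simps)
    ultimately show "u *\<^sub>R p + v *\<^sub>R q \<in> (\<lambda>p. fst p + snd p) ` (K1 \<times> K2)"
      by (auto simp: image_iff intro!: bexI[of _ "(u *\<^sub>R a1 + v *\<^sub>R a2, u *\<^sub>R b1 + v *\<^sub>R b2)"])
  qed
next
  fix t :: real and y
  assume "\<bar>t\<bar> \<le> 1 \<and> y \<in> (\<lambda>p. fst p + snd p) ` (K1 \<times> K2)"
  then obtain a b where ab: "\<bar>t\<bar> \<le> 1" "a \<in> K1" "b \<in> K2" "y = a + b" by auto
  have "t *\<^sub>R a \<in> K1" "t *\<^sub>R b \<in> K2" using mk_D(3)[OF K1] mk_D(3)[OF K2] ab by auto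
  moreover have "t *\<^sub>R y = t *\<^sub>R a + t *\<^sub>R b" using ab by (simp add: scaleR_right_distrib)
  ultimately show "t *\<^sub>R y \<in> (\<lambda>p. fst p + snd p) ` (K1 \<times> K2)"
    by (auto simp: image_iff intro!: bexI[of _ "(t *\<^sub>R a, t *\<^sub>R b)"])
next
  have c: "continuous_map (prod_topology weakstar weakstar) weakstar (\<lambda>p. fst p + snd p)"
    unfolding ws_cont_iff
  proof
    fix x
    have "continuous_map (prod_topology weakstar weakstar) euclideanreal (\<lambda>p. blinfun_apply (fst p) x)"
      using continuous_map_compose[OF continuous_map_fst ws_eval] by (simp add: o_def)
    moreover have "continuous_map (prod_topology weakstar weakstar) euclideanreal (\<lambda>p. blinfun_apply (snd p) x)"
      using continuous_map_compose[OF continuous_map_snd ws_eval] by (simp add: o_def)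
    ultimately show "continuous_map (prod_topology weakstar weakstar) euclideanreal (\<lambda>p. blinfun_apply (fst p + snd p) x)"
      unfolding blinfun.add_left by (rule continuous_map_add)
  qed
  have "compactin (prod_topology weakstar weakstar) (K1 \<times> K2)"
    using mk_D(4)[OF K1] mk_D(4)[OF K2] by (simp add: compactin_Times)
  then have "compactin weakstar ((\<lambda>p. fst p + snd p) ` (K1 \<times> K2))"
    by (rule image_compactin[OF _ c])
  moreover have "(\<lambda>p. fst p + snd p) ` (K1 \<times> K2) \<subseteq> Y"
    using mk_D(1)[OF K1] mk_D(1)[OF K2] by (auto intro!: subspace_add[OF Y])
  ultimately show "compactin (subtopology weakstar Y) ((\<lambda>p. fst p + snd p) ` (K1 \<times> K2))"
    by (simp add: compactin_subtopology)
qed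

lemma approx_K:
  assumes K: "K \<in> mackey_sets Y" and Y: "subspace Y" and lin: "linY Y \<phi>"
    and cont: "continuous_map (subtopology weakstar K) euclideanreal \<phi>" and e: "e > 0"
  shows "\<exists>x. \<forall>y\<in>K. \<bar>\<phi> y - blinfun_apply y x\<bar> < e"
proof (cases "K = {}")
  case True then show ?thesis by simp
next
  case False
  then obtain y1 where "y1 \<in> K" by blast
  then have 0: "0 \<in> K" using mk_zero[OF K] by blast
  have KY: "K \<subseteq> Y" using mk_D(1)[OF K] .
  have phi0: "\<phi> 0 = 0" using linY_zero[OF lin] 0 KY by blast
  have "openin (subtopology weakstar K) {y \<in> topspace (subtopology weakstar K). \<phi> y \<in> {-(e/2)<..<e/2}}"
    using openin_continuous_map_preimage[OF cont, of "{-(e/2)<..<e/2}"] by simp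
  then have "\<exists>T. openin weakstar T \<and> {y \<in> K. \<phi> y \<in> {-(e/2)<..<e/2}} = T \<inter> K"
    by (simp add: openin_subtopology)
  then obtain U where U: "openin weakstar U" "{y \<in> K. \<phi> y \<in> {-(e/2)<..<e/2}} = U \<inter> K"
    by metis
  have Ueq: "\<forall>y\<in>K. (-(e/2) < \<phi> y \<and> \<phi> y < e/2) \<longleftrightarrow> y \<in> U"
  proof
    fix y assume yK: "y \<in> K"
    have "y \<in> {y \<in> K. \<phi> y \<in> {-(e/2)<..<e/2}} \<longleftrightarrow> y \<in> U \<inter> K"
      by (simp only: U(2))
    then show "(-(e/2) < \<phi> y \<and> \<phi> y < e/2) \<longleftrightarrow> y \<in> U" using yK by simp
  qed
  have "(-(e/2) < \<phi> 0 \<and> \<phi> 0 < e/2) \<longleftrightarrow> 0 \<in> U" using Ueq 0 by blast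
  then have "0 \<in> U" using phi0 e by simp
  obtain S \<delta> where S: "finite S" "\<delta> > 0"
      "\<forall>g. (\<forall>x\<in>S. \<bar>blinfun_apply g x - blinfun_apply 0 x\<bar> < \<delta>) \<longrightarrow> g \<in> U"
    using ws_open_nbhd[OF U(1) \<open>0 \<in> U\<close>] by blast
  have "\<forall>y\<in>K. (\<forall>x\<in>S. blinfun_apply y x = 0) \<longrightarrow> \<bar>\<phi> y\<bar> \<le> e / 2"
  proof (intro ballI impI)
    fix y assume yK: "y \<in> K" and yS: "\<forall>x\<in>S. blinfun_apply y x = 0"
    have "\<forall>x\<in>S. \<bar>blinfun_apply y x - blinfun_apply 0 x\<bar> < \<delta>" using yS S(2) by simp
    then have "y \<in> U" using S(3) by blast
    then have "-(e/2) < \<phi> y \<and> \<phi> y < e/2" using Ueq yK by blast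
    then show "\<bar>\<phi> y\<bar> \<le> e / 2" unfolding abs_le_iff by linarith
  qed
  then obtain x0 where x0: "\<forall>y\<in>K. \<bar>\<phi> y - blinfun_apply y x0\<bar> \<le> e / 2"
    using approx_fin[OF S(1) KY mk_D(2)[OF K] _ Y lin] mk_neg[OF K] by blast
  show ?thesis using x0 e by (intro exI[of _ x0]) force
qed

lemma G_imp_Ev:
  fixes Y :: "('a::banach \<Rightarrow>\<^sub>L real) set"
  assumes Y: "subspace Y" and comp: "mackey_complete Y" and lin: "linY Y \<phi>" and G: "Gc Y \<phi>"
  shows "Ev Y \<phi>"
proof -
  define A where "A b = {x. \<forall>y\<in>fst b. \<bar>\<phi> y - blinfun_apply y x\<bar> < snd b}"
    for b :: "('a \<Rightarrow>\<^sub>L real) set \<times> real"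
  define B where "B = mackey_sets Y \<times> {e::real. e > 0}"
  define F where "F = (INF b\<in>B. principal (A b))"
  have Bne: "B \<noteq> {}" using mk_empty[of Y] by (auto simp: B_def intro!: exI[of _ 1])
  have dir: "\<exists>x\<in>B. principal (A x) \<le> inf (principal (A a)) (principal (A b))"
    if a: "a \<in> B" and b: "b \<in> B" for a b
  proof -
    obtain K1 e1 where 1: "a = (K1, e1)" "K1 \<in> mackey_sets Y" "e1 > 0" using a by (auto simp: B_def)
    obtain K2 e2 where 2: "b = (K2, e2)" "K2 \<in> mackey_sets Y" "e2 > 0" using b by (auto simp: B_def)
    define K3 where "K3 = (\<lambda>p. fst p + snd p) ` (insert 0 K1 \<times> insert 0 K2)"
    have K3: "K3 \<in> mackey_sets Y"
      unfolding K3_def by (intro mk_plus mk_insert0 1 2 Y)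
    have sub1: "K1 \<subseteq> K3" unfolding K3_def by (force simp: image_iff)
    have sub2: "K2 \<subseteq> K3" unfolding K3_def by (force simp: image_iff)
    have "(K3, min e1 e2) \<in> B" using K3 1 2 by (simp add: B_def)
    moreover have "A (K3, min e1 e2) \<subseteq> A a \<inter> A b"
      using sub1 sub2 by (fastforce simp: A_def 1 2)
    ultimately show ?thesis by (intro bexI[of _ "(K3, min e1 e2)"]) auto
  qed
  have evF: "eventually P F \<longleftrightarrow> (\<exists>b\<in>B. eventually P (principal (A b)))" for P
    unfolding F_def by (rule eventually_INF_base[OF Bne dir])
  have inA: "eventually (\<lambda>x. x \<in> A (K, e)) F" if "K \<in> mackey_sets Y" "e > 0" for K e
    unfolding evF using that by (auto simp: B_def eventually_principal intro!: bexI[of _ "(K, e)"])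
  have Fne: "F \<noteq> bot"
  proof
    assume "F = bot"
    then have "eventually (\<lambda>x. False) F" by simp
    then obtain b where b: "b \<in> B" "A b = {}" unfolding evF eventually_principal by blast
    obtain K e where Ke: "b = (K, e)" "K \<in> mackey_sets Y" "e > 0" using b(1) by (auto simp: B_def)
    have "continuous_map (subtopology weakstar K) euclideanreal \<phi>" using G Ke(2) by (simp add: Gc_def)
    then obtain x where "\<forall>y\<in>K. \<bar>\<phi> y - blinfun_apply y x\<bar> < e"
      using approx_K[OF Ke(2) Y lin _ Ke(3)] by blast
    then have "x \<in> A b" by (simp add: A_def Ke(1))
    then show False using b(2) by blast
  qed
  have cau: "mackey_cauchy Y F"
    unfolding mackey_cauchy_def
  proof (intro ballI allI impI)
    fix K and e :: real assume K: "K \<in> mackey_sets Y" and e: "e > 0"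
    have ev: "eventually (\<lambda>x. x \<in> A (K, e/2)) F" using inA[OF K] e by simp
    show "\<forall>\<^sub>F (x, x') in F \<times>\<^sub>F F. \<forall>y\<in>K. \<bar>blinfun_apply y (x - x')\<bar> < e"
      unfolding eventually_prod_same
    proof (intro exI conjI allI impI)
      show "eventually (\<lambda>x. x \<in> A (K, e/2)) F" by (rule ev)
      fix x x' assume "x \<in> A (K, e/2)" "x' \<in> A (K, e/2)"
      then have "\<forall>y\<in>K. \<bar>\<phi> y - blinfun_apply y x\<bar> < e/2" "\<forall>y\<in>K. \<bar>\<phi> y - blinfun_apply y x'\<bar> < e/2"
        by (auto simp: A_def)
      then have "\<forall>y\<in>K. \<bar>blinfun_apply y (x - x')\<bar> < e"
      proof (intro ballI)
        fix y assume H: "\<forall>y\<in>K. \<bar>\<phi> y - blinfun_apply y x\<bar> < e/2" "\<forall>y\<in>K. \<bar>\<phi> y - blinfun_apply y x'\<bar> < e/2"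
          and yK: "y \<in> K"
        have a: "\<bar>\<phi> y - blinfun_apply y x\<bar> < e/2" and b: "\<bar>\<phi> y - blinfun_apply y x'\<bar> < e/2"
          using H yK by blast+
        have eq: "blinfun_apply y (x - x') = blinfun_apply y x - blinfun_apply y x'"
          by (simp add: blinfun.diff_right)
        show "\<bar>blinfun_apply y (x - x')\<bar> < e"
          unfolding eq abs_less_iff using a b unfolding abs_less_iff by linarith
      qed
      then show "case (x, x') of (x, x') \<Rightarrow> \<forall>y\<in>K. \<bar>blinfun_apply y (x - x')\<bar> < e"
        by simp
    qed
  qed
  obtain x0 where x0: "mackey_converges Y F x0"
    using comp Fne cau unfolding mackey_complete_def by blast
  have "\<phi> y = blinfun_apply y x0" if yY: "y \<in> Y" for y
  proof (rule ccontr)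
    assume ne: "\<phi> y \<noteq> blinfun_apply y x0"
    define e where "e = \<bar>\<phi> y - blinfun_apply y x0\<bar> / 2"
    have e: "e > 0" using ne by (simp add: e_def)
    define Ky where "Ky = (\<lambda>t. t *\<^sub>R y) ` {-1..1}"
    have Ky: "Ky \<in> mackey_sets Y" unfolding Ky_def by (rule mk_seg[OF Y yY])
    have yK: "y \<in> Ky" unfolding Ky_def by (rule mk_seg_mem)
    have "eventually (\<lambda>x. \<forall>z\<in>Ky. \<bar>blinfun_apply z (x - x0)\<bar> < e) F"
      using x0 Ky e unfolding mackey_converges_def by blast
    moreover have "eventually (\<lambda>x. x \<in> A (Ky, e)) F" using inA[OF Ky e] .
    ultimately have "eventually (\<lambda>x. \<bar>blinfun_apply y (x - x0)\<bar> < e \<and> \<bar>\<phi> y - blinfun_apply y x\<bar> < e) F"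
      using yK by (auto simp: A_def elim: eventually_elim2)
    then obtain x where "\<bar>blinfun_apply y (x - x0)\<bar> < e" "\<bar>\<phi> y - blinfun_apply y x\<bar> < e"
      using eventually_happens'[OF Fne] by blast
    then have "\<bar>\<phi> y - blinfun_apply y x0\<bar> < 2 * e" by (simp add: blinfun.diff_right)
    then show False by (simp add: e_def)
  qed
  then show ?thesis unfolding Ev_def by blast
qed

definition Sc :: "('a::real_normed_vector \<Rightarrow>\<^sub>L real) set \<Rightarrow> (('a \<Rightarrow>\<^sub>L real) \<Rightarrow> real) \<Rightarrow> bool" where
  "Sc Y f \<longleftrightarrow> (\<forall>s y. (\<forall>n. s n \<in> Y) \<and> y \<in> Y \<and> limitin (subtopology weakstar Y) s y sequentially
                 \<longrightarrow> (\<lambda>n. f (s n)) \<longlonglongrightarrow> f y)"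

lemma linY_neg: "linY Y f \<Longrightarrow> linY Y (\<lambda>y. - f y)"
  unfolding linY_def by (simp add: algebra_simps)

lemma Sc_neg: "Sc Y f \<Longrightarrow> Sc Y (\<lambda>y. - f y)"
  unfolding Sc_def by (auto intro: tendsto_minus)

lemma half_closed:
  fixes Y :: "('a::banach \<Rightarrow>\<^sub>L real) set"
  assumes E: "property_E' TYPE('a)" and K: "K \<in> mackey_sets Y" and lin: "linY Y \<psi>" and S: "Sc Y \<psi>"
  shows "closedin weakstar {y \<in> K. \<psi> y \<le> a}"
proof -
  let ?C = "{y \<in> K. \<psi> y \<le> a}"
  have KY: "K \<subseteq> Y" by (rule mk_D(1)[OF K])
  have "convex ?C"
  proof (rule convexI)
    fix y1 y2 and u v :: real
    assume y1: "y1 \<in> ?C" and y2: "y2 \<in> ?C" and uv: "0 \<le> u" "0 \<le> v" "u + v = 1"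
    have "u *\<^sub>R y1 + v *\<^sub>R y2 \<in> K" using mk_D(2)[OF K] y1 y2 uv by (simp add: convexD)
    moreover have "\<psi> (u *\<^sub>R y1 + v *\<^sub>R y2) = u * \<psi> y1 + v * \<psi> y2"
      using linY_D[OF lin] y1 y2 KY by blast
    moreover have "u * \<psi> y1 \<le> u * a" "v * \<psi> y2 \<le> v * a"
      using y1 y2 uv by (auto intro: mult_left_mono)
    moreover have "u * a + v * a = a"
    proof -
      have "u * a + v * a = (u + v) * a" by (simp add: distrib_right)
      then show ?thesis using uv(3) by simp
    qed
    ultimately show "u *\<^sub>R y1 + v *\<^sub>R y2 \<in> ?C" by auto
  qed
  moreover have "bounded ?C"
    by (rule bounded_subset[OF mk_bounded[OF K]]) auto
  moreover have "weakstar_seq_closed ?C"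
    unfolding weakstar_seq_closed_def
  proof (intro allI impI)
    fix s y assume H: "(\<forall>n. s n \<in> ?C) \<and> limitin weakstar s y sequentially"
    have yK: "y \<in> K"
      using limitin_closedin[OF _ mk_D(5)[OF K], of s y sequentially] H by auto
    have sY: "\<forall>n. s n \<in> Y" and yY: "y \<in> Y" using H yK KY by auto
    have "limitin (subtopology weakstar Y) s y sequentially"
      using H sY yY by (simp add: limitin_subtopology)
    then have lim: "(\<lambda>n. \<psi> (s n)) \<longlonglongrightarrow> \<psi> y" using S sY yY unfolding Sc_def by blast
    have "eventually (\<lambda>n. a \<ge> \<psi> (s n)) sequentially" using H by auto
    then have "\<psi> y \<le> a" using tendsto_upperbound[OF lim] by simp
    then show "y \<in> ?C" using yK by simp
  qed
  ultimately show ?thesis using E unfolding property_E'_def by blast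
qed

lemma S_imp_G:
  fixes Y :: "('a::banach \<Rightarrow>\<^sub>L real) set"
  assumes E: "property_E' TYPE('a)" and lin: "linY Y \<phi>" and S: "Sc Y \<phi>"
  shows "Gc Y \<phi>"
  unfolding Gc_def
proof
  fix K assume K: "K \<in> mackey_sets Y"
  have top: "topspace (subtopology weakstar K) = K" by simp
  show "continuous_map (subtopology weakstar K) euclideanreal \<phi>"
    unfolding continuous_map_upper_lower_semicontinuous_le top
  proof (intro allI conjI)
    fix a
    have "closedin weakstar {y \<in> K. (\<lambda>y. - \<phi> y) y \<le> - a}"
      by (rule half_closed[OF E K linY_neg[OF lin] Sc_neg[OF S]])
    moreover have "{y \<in> K. (\<lambda>y. - \<phi> y) y \<le> - a} = {x \<in> K. a \<le> \<phi> x}" by auto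
    ultimately have c1: "closedin weakstar {x \<in> K. a \<le> \<phi> x}" by simp
    show "closedin (subtopology weakstar K) {x \<in> K. a \<le> \<phi> x}"
      unfolding closedin_subtopology using c1 by (intro exI[of _ "{x \<in> K. a \<le> \<phi> x}"]) auto
    have c2: "closedin weakstar {x \<in> K. \<phi> x \<le> a}"
      by (rule half_closed[OF E K lin S])
    show "closedin (subtopology weakstar K) {x \<in> K. \<phi> x \<le> a}"
      unfolding closedin_subtopology using c2 by (intro exI[of _ "{x \<in> K. \<phi> x \<le> a}"]) auto
  qed
qed

definition Pl1 :: "(nat \<Rightarrow> real) set" where
  "Pl1 = {a. \<forall>N. (\<Sum>n<N. \<bar>a n\<bar>) \<le> 1}"

lemma Pl1_summable:
  assumes "a \<in> Pl1"
  shows "summable (\<lambda>n. \<bar>a n\<bar>)" "(\<Sum>n. \<bar>a n\<bar>) \<le> 1"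
proof -
  have b: "(\<Sum>n<N. \<bar>a n\<bar>) \<le> 1" for N using assms by (simp add: Pl1_def)
  show s: "summable (\<lambda>n. \<bar>a n\<bar>)"
  proof (rule bounded_imp_summable)
    fix n
    have "(\<Sum>k\<le>n. \<bar>a k\<bar>) = (\<Sum>k<Suc n. \<bar>a k\<bar>)" by (simp add: lessThan_Suc_atMost)
    moreover have "(\<Sum>k<Suc n. \<bar>a k\<bar>) \<le> 1" by (rule b)
    ultimately show "(\<Sum>k\<le>n. \<bar>a k\<bar>) \<le> 1" by linarith
  qed simp
  show "(\<Sum>n. \<bar>a n\<bar>) \<le> 1" by (rule suminf_le_const[OF s b])
qed

lemma Pl1_bound:
  assumes "a \<in> Pl1"
  shows "\<bar>a n\<bar> \<le> 1"
proof -
  have "\<bar>a n\<bar> \<le> (\<Sum>k<Suc n. \<bar>a k\<bar>)"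
    by (rule member_le_sum) auto
  also have "\<dots> \<le> 1" using assms unfolding Pl1_def by blast
  finally show ?thesis .
qed

lemma tail_est:
  assumes a: "a \<in> Pl1" and c: "\<And>n. \<bar>c n\<bar> \<le> r"
  shows "summable (\<lambda>n. a n * c n)" "\<bar>\<Sum>n. a n * c n\<bar> \<le> r"
proof -
  have r: "0 \<le> r" using c[of 0] by linarith
  have sa: "summable (\<lambda>n. \<bar>a n\<bar>)" using Pl1_summable[OF a] by simp
  have le: "\<bar>a n * c n\<bar> \<le> r * \<bar>a n\<bar>" for n
  proof -
    have "\<bar>a n\<bar> * \<bar>c n\<bar> \<le> \<bar>a n\<bar> * r" by (rule mult_left_mono[OF c abs_ge_zero])
    then show ?thesis by (simp add: abs_mult mult.commute)
  qed
  have sr: "summable (\<lambda>n. r * \<bar>a n\<bar>)" using summable_mult[OF sa] .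
  have sabs: "summable (\<lambda>n. \<bar>a n * c n\<bar>)"
    by (rule summable_comparison_test'[OF sr, of 0]) (use le in simp)
  show "summable (\<lambda>n. a n * c n)" by (rule summable_rabs_cancel[OF sabs])
  have "\<bar>\<Sum>n. a n * c n\<bar> \<le> (\<Sum>n. \<bar>a n * c n\<bar>)" by (rule summable_rabs[OF sabs])
  also have "\<dots> \<le> (\<Sum>n. r * \<bar>a n\<bar>)" by (rule suminf_le[OF le sabs sr])
  also have "\<dots> = r * (\<Sum>n. \<bar>a n\<bar>)" by (rule suminf_mult[OF sa])
  also have "\<dots> \<le> r * 1" using Pl1_summable(2)[OF a] r by (intro mult_left_mono) auto
  finally show "\<bar>\<Sum>n. a n * c n\<bar> \<le> r" by simp
qed

lemma Pl1_conv:
  assumes a: "a \<in> Pl1" and b: "b \<in> Pl1" and uv: "0 \<le> u" "0 \<le> v" "u + v = 1"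
  shows "(\<lambda>n. u * a n + v * b n) \<in> Pl1"
  unfolding Pl1_def
proof (intro CollectI allI)
  fix N :: nat
  have "(\<Sum>n<N. \<bar>u * a n + v * b n\<bar>) \<le> (\<Sum>n<N. u * \<bar>a n\<bar> + v * \<bar>b n\<bar>)"
  proof (rule sum_mono)
    fix n
    have "\<bar>u * a n + v * b n\<bar> \<le> \<bar>u * a n\<bar> + \<bar>v * b n\<bar>" by (rule abs_triangle_ineq)
    also have "\<dots> = u * \<bar>a n\<bar> + v * \<bar>b n\<bar>" using uv by (simp add: abs_mult)
    finally show "\<bar>u * a n + v * b n\<bar> \<le> u * \<bar>a n\<bar> + v * \<bar>b n\<bar>" .
  qed
  also have "\<dots> = u * (\<Sum>n<N. \<bar>a n\<bar>) + v * (\<Sum>n<N. \<bar>b n\<bar>)"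
    by (simp add: sum.distrib sum_distrib_left)
  also have "\<dots> \<le> u * 1 + v * 1"
    using a b uv by (intro add_mono mult_left_mono) (auto simp: Pl1_def)
  finally show "(\<Sum>n<N. \<bar>u * a n + v * b n\<bar>) \<le> 1" using uv by simp
qed

lemma Pl1_scale:
  assumes a: "a \<in> Pl1" and t: "\<bar>t\<bar> \<le> 1"
  shows "(\<lambda>n. t * a n) \<in> Pl1"
  unfolding Pl1_def
proof (intro CollectI allI)
  fix N :: nat
  have "(\<Sum>n<N. \<bar>t * a n\<bar>) = \<bar>t\<bar> * (\<Sum>n<N. \<bar>a n\<bar>)"
    by (simp add: abs_mult sum_distrib_left)
  also have "\<dots> \<le> 1 * 1"
    using a t by (intro mult_mono) (auto simp: Pl1_def intro: sum_nonneg)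
  finally show "(\<Sum>n<N. \<bar>t * a n\<bar>) \<le> 1" by simp
qed

lemma Pl1_delta: "(\<lambda>m. if m = n then 1 else 0) \<in> Pl1"
  unfolding Pl1_def
proof (intro CollectI allI)
  fix N :: nat
  have "(\<Sum>m<N. \<bar>if m = n then 1 else 0 :: real\<bar>) = (\<Sum>m<N. if m = n then 1 else 0)"
    by (intro sum.cong) auto
  also have "\<dots> \<le> 1" by (simp add: sum.delta)
  finally show "(\<Sum>m<N. \<bar>if m = n then 1 else 0 :: real\<bar>) \<le> 1" .
qed

lemma Pl1_zero: "(\<lambda>m. 0) \<in> Pl1"
  by (simp add: Pl1_def)

lemma Pl1_compact: "compactin (product_topology (\<lambda>_. euclideanreal) UNIV) Pl1"
proof (rule closed_compactin)
  show "compactin (product_topology (\<lambda>_. euclideanreal) UNIV) (PiE UNIV (\<lambda>_. {-1..1::real}))"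
    by (simp add: compactin_PiE)
  show "Pl1 \<subseteq> PiE UNIV (\<lambda>_. {-1..1::real})"
    using Pl1_bound by (auto simp: abs_le_iff)
  have cl: "closedin (product_topology (\<lambda>_. euclideanreal) UNIV)
      {a \<in> topspace (product_topology (\<lambda>_. euclideanreal) UNIV). (\<Sum>n<N. \<bar>a n\<bar>) \<in> {..1}}" for N :: nat
  proof (rule closedin_continuous_map_preimage)
    show "continuous_map (product_topology (\<lambda>_. euclideanreal) UNIV) euclideanreal (\<lambda>a. \<Sum>n<N. \<bar>a n\<bar>)"
      by (intro continuous_map_sum continuous_map_real_abs continuous_map_product_projection) auto
  qed simp
  define C where "C N = {a \<in> topspace (product_topology (\<lambda>_. euclideanreal) UNIV). (\<Sum>n<N. \<bar>a n\<bar>) \<in> {..1}}" for N :: nat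
  have "Pl1 = \<Inter>(range C)"
    unfolding Pl1_def C_def by (rule set_eqI) simp
  moreover have "closedin (product_topology (\<lambda>_. euclideanreal) UNIV) (\<Inter>(range C))"
  proof (rule closedin_Inter)
    show "range C \<noteq> {}" by simp
    fix S assume "S \<in> range C"
    then obtain N where "S = C N" by blast
    then show "closedin (product_topology (\<lambda>_. euclideanreal) UNIV) S"
      unfolding C_def using cl by simp
  qed
  ultimately show "closedin (product_topology (\<lambda>_. euclideanreal) UNIV) Pl1"
    by simp
qed

lemma Phi_split:
  assumes a: "a \<in> Pl1" and B: "\<And>n. \<bar>w n\<bar> \<le> B" and N: "\<And>n. n \<ge> N \<Longrightarrow> \<bar>w n\<bar> \<le> r"
  shows "summable (\<lambda>n. a n * w n)"
    "\<bar>(\<Sum>n. a n * w n) - (\<Sum>n<N. a n * w n)\<bar> \<le> r"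
proof -
  define w1 where "w1 n = (if n < N then w n else 0)" for n
  define w2 where "w2 n = (if n < N then 0 else w n)" for n
  have r: "0 \<le> r" using N[of N] by linarith
  have B0: "0 \<le> B" using B[of 0] by linarith
  have b1: "\<bar>w1 n\<bar> \<le> B" for n using B B0 by (simp add: w1_def)
  have b2: "\<bar>w2 n\<bar> \<le> r" for n using N r by (simp add: w2_def)
  have s1: "summable (\<lambda>n. a n * w1 n)" using tail_est(1)[OF a b1] .
  have s2: "summable (\<lambda>n. a n * w2 n)" using tail_est(1)[OF a b2] .
  show "summable (\<lambda>n. a n * w n)" using tail_est(1)[OF a B] .
  have eq: "(\<lambda>n. a n * w n) = (\<lambda>n. a n * w1 n + a n * w2 n)"
    by (rule ext) (simp add: w1_def w2_def)
  have "(\<Sum>n. a n * w n) = (\<Sum>n. a n * w1 n) + (\<Sum>n. a n * w2 n)"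
    unfolding eq by (rule suminf_add[OF s1 s2, symmetric])
  moreover have "(\<Sum>n. a n * w1 n) = (\<Sum>n<N. a n * w1 n)"
    by (rule suminf_finite) (auto simp: w1_def)
  moreover have "(\<Sum>n<N. a n * w1 n) = (\<Sum>n<N. a n * w n)"
    by (rule sum.cong) (auto simp: w1_def)
  ultimately have "(\<Sum>n. a n * w n) - (\<Sum>n<N. a n * w n) = (\<Sum>n. a n * w2 n)" by simp
  then show "\<bar>(\<Sum>n. a n * w n) - (\<Sum>n<N. a n * w n)\<bar> \<le> r"
    using tail_est(2)[OF a b2] by simp
qed

lemma Phi_cont:
  fixes w :: "nat \<Rightarrow> real"
  assumes w0: "w \<longlonglongrightarrow> 0" and B: "\<And>n. \<bar>w n\<bar> \<le> B"
  shows "continuous_map (subtopology (product_topology (\<lambda>_. euclideanreal) UNIV) Pl1) euclideanreal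
           (\<lambda>a. \<Sum>n. a n * w n)"
proof (rule cont_eps)
  fix a0 and e :: real
  assume a0: "a0 \<in> topspace (subtopology (product_topology (\<lambda>_. euclideanreal) UNIV) Pl1)" and e: "e > 0"
  then have a0P: "a0 \<in> Pl1" by simp
  have B0: "0 \<le> B" using B[of 0] by linarith
  obtain N where N: "\<forall>n\<ge>N. norm (w n - 0) < e / 4"
    using LIMSEQ_D[OF w0, of "e/4"] e by auto
  have Nle: "\<And>n. n \<ge> N \<Longrightarrow> \<bar>w n\<bar> \<le> e / 4" using N by fastforce
  define \<delta> where "\<delta> = e / (4 * (real N * B + 1))"
  have pos: "real N * B + 1 > 0" using B0 by (simp add: add_nonneg_pos)
  have \<delta>: "\<delta> > 0" unfolding \<delta>_def using e pos by simp
  have D: "4 * (real N * B + 1) * \<delta> = e" unfolding \<delta>_def using pos by simp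
  then have D': "real N * B * \<delta> * 4 + \<delta> * 4 = e" by (simp add: algebra_simps)
  define V where "V = {f :: nat \<Rightarrow> real. \<forall>i\<in>{..<N}. f i \<in> ball (a0 i) \<delta>}"
  have "open V"
    unfolding V_def using product_topology_basis'[of "{..<N}" "\<lambda>i. ball (a0 i) \<delta>" "\<lambda>i. i"] by simp
  then have "openin (product_topology (\<lambda>_. euclideanreal) UNIV) V"
    by (simp add: euclidean_product_topology)
  then have opU: "openin (subtopology (product_topology (\<lambda>_. euclideanreal) UNIV) Pl1) (V \<inter> Pl1)"
    unfolding openin_subtopology by blast
  have inU: "a0 \<in> V \<inter> Pl1" using a0P \<delta> by (simp add: V_def)
  have "\<bar>(\<Sum>n. a n * w n) - (\<Sum>n. a0 n * w n)\<bar> < e" if aU: "a \<in> V \<inter> Pl1" for a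
  proof -
    have aP: "a \<in> Pl1" using aU by simp
    have close: "\<bar>a n - a0 n\<bar> < \<delta>" if "n < N" for n
      using aU that by (auto simp: V_def dist_real_def abs_minus_commute)
    have t1: "\<bar>(\<Sum>n. a n * w n) - (\<Sum>n<N. a n * w n)\<bar> \<le> e / 4"
      by (rule Phi_split(2)[OF aP B Nle])
    have t2: "\<bar>(\<Sum>n. a0 n * w n) - (\<Sum>n<N. a0 n * w n)\<bar> \<le> e / 4"
      by (rule Phi_split(2)[OF a0P B Nle])
    have "\<bar>(\<Sum>n<N. a n * w n) - (\<Sum>n<N. a0 n * w n)\<bar> = \<bar>\<Sum>n<N. (a n - a0 n) * w n\<bar>"
      by (simp add: sum_subtractf left_diff_distrib)
    also have "\<dots> \<le> (\<Sum>n<N. \<bar>(a n - a0 n) * w n\<bar>)" by (rule sum_abs)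
    also have "\<dots> \<le> of_nat (card {..<N}) * (\<delta> * B)"
    proof (rule sum_bounded_above)
      fix n assume "n \<in> {..<N}"
      then have "\<bar>a n - a0 n\<bar> \<le> \<delta>" using close by (simp add: less_imp_le)
      then show "\<bar>(a n - a0 n) * w n\<bar> \<le> \<delta> * B"
        unfolding abs_mult by (intro mult_mono B) (auto simp: less_imp_le[OF \<delta>])
    qed
    also have "\<dots> = real N * B * \<delta>" by simp
    finally have hd: "\<bar>(\<Sum>n<N. a n * w n) - (\<Sum>n<N. a0 n * w n)\<bar> \<le> real N * B * \<delta>" .
    have "real N * B * \<delta> < e / 4" using D' \<delta> by linarith
    then show ?thesis using t1 t2 hd unfolding abs_le_iff abs_less_iff by linarith
  qed
  then show "\<exists>U. openin (subtopology (product_topology (\<lambda>_. euclideanreal) UNIV) Pl1) U \<and> a0 \<in> U \<and>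
              (\<forall>y\<in>U. \<bar>(\<Sum>n. y n * w n) - (\<Sum>n. a0 n * w n)\<bar> < e)"
    using opU inU by blast
qed

lemma nullseq_hull:
  fixes z :: "nat \<Rightarrow> ('a::banach \<Rightarrow>\<^sub>L real)"
  assumes Y: "subspace Y" and clY: "closed Y" and zY: "\<And>n. z n \<in> Y"
    and null: "\<And>x. (\<lambda>n. blinfun_apply (z n) x) \<longlonglongrightarrow> 0"
  shows "\<exists>K\<in>mackey_sets Y. 0 \<in> K \<and> (\<forall>n. z n \<in> K)"
proof -
  have "bounded (range z)"
  proof (rule UBP)
    fix x
    have "Bseq (\<lambda>n. blinfun_apply (z n) x)"
      using null[of x] by (intro convergent_imp_Bseq) (auto simp: convergent_def)
    then obtain M where "\<forall>n. norm (blinfun_apply (z n) x) \<le> M" unfolding Bseq_def by blast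
    then show "\<exists>M. \<forall>a\<in>range z. \<bar>blinfun_apply a x\<bar> \<le> M" by auto
  qed
  then obtain M where M: "M > 0" "\<And>n. norm (z n) \<le> M"
    unfolding bounded_pos by auto
  define T where "T a = (\<Sum>n. a n *\<^sub>R z n)" for a :: "nat \<Rightarrow> real"
  have sumT: "summable (\<lambda>n. a n *\<^sub>R z n)" if a: "a \<in> Pl1" for a
  proof (rule summable_norm_cancel)
    have "summable (\<lambda>n. M * \<bar>a n\<bar>)" using summable_mult[OF Pl1_summable(1)[OF a]] .
    then show "summable (\<lambda>n. norm (a n *\<^sub>R z n))"
    proof (rule summable_comparison_test'[of _ 0])
      fix n
      have "\<bar>a n\<bar> * norm (z n) \<le> \<bar>a n\<bar> * M" using M(2) by (intro mult_left_mono) auto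
      then show "norm (norm (a n *\<^sub>R z n)) \<le> M * \<bar>a n\<bar>" by (simp add: mult.commute)
    qed
  qed
  have Tx: "blinfun_apply (T a) x = (\<Sum>n. a n * blinfun_apply (z n) x)" if a: "a \<in> Pl1" for a x
    unfolding T_def using blinfun.bounded_linear_left[THEN bounded_linear.suminf, OF sumT[OF a], of x]
    by (simp add: blinfun.scaleR_left)
  have TY: "T a \<in> Y" if a: "a \<in> Pl1" for a
    unfolding T_def
  proof (rule Lim_in_closed_set[OF clY _ _ summable_LIMSEQ[OF sumT[OF a]]])
    have "(\<Sum>i<n. a i *\<^sub>R z i) \<in> Y" for n
      by (rule subspace_sum[OF Y]) (rule subspace_scale[OF Y zY])
    then show "\<forall>\<^sub>F n in sequentially. (\<Sum>i<n. a i *\<^sub>R z i) \<in> Y"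
      by (simp add: always_eventually)
  qed simp
  have Tlin: "T (\<lambda>n. u * a n + v * b n) = u *\<^sub>R T a + v *\<^sub>R T b"
    if a: "a \<in> Pl1" and b: "b \<in> Pl1" for a b u v
  proof -
    have "(\<lambda>n. (u * a n + v * b n) *\<^sub>R z n) = (\<lambda>n. u *\<^sub>R (a n *\<^sub>R z n) + v *\<^sub>R (b n *\<^sub>R z n))"
      by (rule ext) (simp add: scaleR_add_left)
    then have "T (\<lambda>n. u * a n + v * b n) = (\<Sum>n. u *\<^sub>R (a n *\<^sub>R z n) + v *\<^sub>R (b n *\<^sub>R z n))"
      by (simp add: T_def)
    also have "\<dots> = (\<Sum>n. u *\<^sub>R (a n *\<^sub>R z n)) + (\<Sum>n. v *\<^sub>R (b n *\<^sub>R z n))"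
      by (rule suminf_add[symmetric]) (intro summable_scaleR_right sumT a b)+
    also have "\<dots> = u *\<^sub>R T a + v *\<^sub>R T b"
      unfolding T_def
      using suminf_scaleR_right[OF sumT[OF a], of u] suminf_scaleR_right[OF sumT[OF b], of v] by simp
    finally show ?thesis .
  qed
  define K where "K = T ` Pl1"
  have KY: "K \<subseteq> Y" using TY by (auto simp: K_def)
  have convK: "convex K"
  proof (rule convexI)
    fix p q and u v :: real
    assume p: "p \<in> K" and q: "q \<in> K" and uv: "0 \<le> u" "0 \<le> v" "u + v = 1"
    obtain a where a: "a \<in> Pl1" "p = T a" using p by (auto simp: K_def)
    obtain b where b: "b \<in> Pl1" "q = T b" using q by (auto simp: K_def)
    have "u *\<^sub>R p + v *\<^sub>R q = T (\<lambda>n. u * a n + v * b n)" using Tlin[OF a(1) b(1)] a b by simp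
    moreover have "(\<lambda>n. u * a n + v * b n) \<in> Pl1" by (rule Pl1_conv[OF a(1) b(1) uv])
    ultimately show "u *\<^sub>R p + v *\<^sub>R q \<in> K" by (simp add: K_def)
  qed
  have symK: "t *\<^sub>R p \<in> K" if t1: "\<bar>t\<bar> \<le> 1" and pK: "p \<in> K" for t p
  proof -
    obtain a where a: "a \<in> Pl1" "p = T a" using pK by (auto simp: K_def)
    have "t *\<^sub>R p = T (\<lambda>n. t * a n + 0 * a n)" using Tlin[OF a(1) a(1), of t 0] a by simp
    moreover have "(\<lambda>n. t * a n + 0 * a n) \<in> Pl1" using Pl1_scale[OF a(1) t1] by simp
    ultimately show ?thesis by (simp add: K_def)
  qed
  have contT: "continuous_map (subtopology (product_topology (\<lambda>_. euclideanreal) UNIV) Pl1) weakstar T"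
    unfolding ws_cont_iff
  proof
    fix x
    have w0: "(\<lambda>n. blinfun_apply (z n) x) \<longlonglongrightarrow> 0" by (rule null)
    have wB: "\<bar>blinfun_apply (z n) x\<bar> \<le> M * norm x" for n
    proof -
      have "\<bar>blinfun_apply (z n) x\<bar> \<le> norm (z n) * norm x" using norm_blinfun[of "z n" x] by simp
      also have "\<dots> \<le> M * norm x" using M(2) by (intro mult_right_mono) auto
      finally show ?thesis .
    qed
    have "continuous_map (subtopology (product_topology (\<lambda>_. euclideanreal) UNIV) Pl1) euclideanreal
           (\<lambda>a. \<Sum>n. a n * blinfun_apply (z n) x)"
      by (rule Phi_cont[OF w0 wB])
    then show "continuous_map (subtopology (product_topology (\<lambda>_. euclideanreal) UNIV) Pl1) euclideanreal
           (\<lambda>a. blinfun_apply (T a) x)"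
      by (rule continuous_map_eq) (simp add: Tx)
  qed
  have "compactin (subtopology (product_topology (\<lambda>_. euclideanreal) UNIV) Pl1) Pl1"
    using Pl1_compact by (simp add: compactin_subtopology)
  then have "compactin weakstar K"
    unfolding K_def by (rule image_compactin[OF _ contT])
  then have cK: "compactin (subtopology weakstar Y) K" using KY by (simp add: compactin_subtopology)
  have mk: "K \<in> mackey_sets Y"
    unfolding mackey_sets_def using KY convK symK cK by blast
  have "T (\<lambda>n. 0) = 0" by (simp add: T_def)
  then have zero: "0 \<in> K" using Pl1_zero unfolding K_def by (metis image_eqI)
  have "T (\<lambda>m. if m = n then 1 else 0) = z n" for n
  proof -
    have "(\<lambda>m. (if m = n then 1 else 0) *\<^sub>R z m) = (\<lambda>m. if m = n then z m else 0)"
      by (rule ext) simp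
    then show ?thesis unfolding T_def using sums_single[of n z] by (simp add: sums_iff)
  qed
  then have "z n \<in> K" for n using Pl1_delta[of n] unfolding K_def by (metis image_eqI)
  then show ?thesis using mk zero by blast
qed

lemma G_imp_S:
  fixes Y :: "('a::banach \<Rightarrow>\<^sub>L real) set"
  assumes Y: "subspace Y" and clY: "closed Y" and lin: "linY Y \<phi>" and G: "Gc Y \<phi>"
  shows "Sc Y \<phi>"
  unfolding Sc_def
proof (intro allI impI)
  fix s y assume H: "(\<forall>n. s n \<in> Y) \<and> y \<in> Y \<and> limitin (subtopology weakstar Y) s y sequentially"
  then have sY: "\<And>n. s n \<in> Y" and yY: "y \<in> Y" and lim: "limitin weakstar s y sequentially"
    by (auto simp: limitin_subtopology)
  define z where "z n = s n - y" for n
  have zY: "z n \<in> Y" for n using sY yY Y by (simp add: z_def subspace_diff)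
  have zlim: "(\<lambda>n. blinfun_apply (z n) x) \<longlonglongrightarrow> 0" for x
  proof -
    have "(\<lambda>n. blinfun_apply (s n) x) \<longlonglongrightarrow> blinfun_apply y x"
      by (rule ws_limit_iff[THEN iffD1, OF lim, rule_format])
    then have "(\<lambda>n. blinfun_apply (s n) x - blinfun_apply y x) \<longlonglongrightarrow> blinfun_apply y x - blinfun_apply y x"
      using tendsto_const by (rule tendsto_diff)
    then have l: "(\<lambda>n. blinfun_apply (s n) x - blinfun_apply y x) \<longlonglongrightarrow> 0"
      by (simp only: diff_self)
    have eq: "(\<lambda>n. blinfun_apply (z n) x) = (\<lambda>n. blinfun_apply (s n) x - blinfun_apply y x)"
      by (simp add: z_def blinfun.diff_left)
    show ?thesis unfolding eq by (rule l)
  qed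
  obtain K where K: "K \<in> mackey_sets Y" "0 \<in> K" "\<And>n. z n \<in> K"
    using nullseq_hull[OF Y clY zY zlim] by blast
  have "limitin weakstar z 0 sequentially" using zlim by (simp add: ws_limit_iff)
  then have "limitin (subtopology weakstar K) z 0 sequentially"
    using K by (simp add: limitin_subtopology)
  moreover have "continuous_map (subtopology weakstar K) euclideanreal \<phi>" using G K(1) by (simp add: Gc_def)
  ultimately have "limitin euclideanreal (\<phi> \<circ> z) (\<phi> 0) sequentially"
    by (intro continuous_map_limit) 
  then have "(\<lambda>n. \<phi> (z n)) \<longlonglongrightarrow> 0" using linY_zero[OF lin yY] by (simp add: o_def)
  then have "(\<lambda>n. \<phi> (z n) + \<phi> y) \<longlonglongrightarrow> 0 + \<phi> y" by (intro tendsto_intros)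
  moreover have "\<phi> (z n) + \<phi> y = \<phi> (s n)" for n
    using linY_diff[OF lin sY yY, of n] by (simp add: z_def)
  ultimately show "(\<lambda>n. \<phi> (s n)) \<longlonglongrightarrow> \<phi> y" by simp
qed

lemma mazur_iff:
  "mazur Y \<longleftrightarrow> (\<forall>f. linY Y f \<and> Sc Y f \<longrightarrow> continuous_map (subtopology weakstar Y) euclideanreal f)"
  unfolding mazur_def linY_def Sc_def by blast

lemma main_equiv:
  fixes Y :: "('a::banach \<Rightarrow>\<^sub>L real) set"
  assumes E: "property_E' TYPE('a)" and Y: "subspace Y" and clY: "closed Y"
  shows "mackey_complete Y \<longleftrightarrow> mazur Y"
proof
  assume comp: "mackey_complete Y"
  show "mazur Y"
    unfolding mazur_iff
  proof (intro allI impI)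
    fix f assume H: "linY Y f \<and> Sc Y f"
    have "Gc Y f" using S_imp_G[OF E] H by blast
    then have "Ev Y f" using G_imp_Ev[OF Y comp] H by blast
    then show "continuous_map (subtopology weakstar Y) euclideanreal f"
      unfolding Ev_def using eval_cont by blast
  qed
next
  assume mz: "mazur Y"
  show "mackey_complete Y"
  proof (rule complete_of_G[OF Y], intro allI impI)
    fix f assume H: "linY Y f \<and> Gc Y f"
    have "Sc Y f" using G_imp_S[OF Y clY] H by blast
    then have "continuous_map (subtopology weakstar Y) euclideanreal f"
      using mz H unfolding mazur_iff by blast
    then show "Ev Y f" unfolding Ev_def using cont_eval[OF Y] H by blast
  qed
qed

theorem corollary3p2:
  assumes "property_E' TYPE('a::banach)"
  shows "(\<forall>Y :: ('a \<Rightarrow>\<^sub>L real) set. subspace Y \<and> closed Y \<and> weakstar closure_of Y = UNIV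
            \<longrightarrow> (mackey_complete Y \<longleftrightarrow> mazur Y))
       \<and> (fully_mackey_complete TYPE('a) \<longleftrightarrow> fully_mazur TYPE('a))"
proof
  show "\<forall>Y :: ('a \<Rightarrow>\<^sub>L real) set. subspace Y \<and> closed Y \<and> weakstar closure_of Y = UNIV
            \<longrightarrow> (mackey_complete Y \<longleftrightarrow> mazur Y)"
    using main_equiv[OF assms] by blast
  show "fully_mackey_complete TYPE('a) \<longleftrightarrow> fully_mazur TYPE('a)"
    unfolding fully_mackey_complete_def fully_mazur_def using main_equiv[OF assms] by blast
qed


end
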